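(* Under the standing assumptions below, for any $\gamma\in\mathbb R^I_+$, $x\in\mathcal X$, $s\in\mathcal S$ and $\phi\in\mathbb R^I$, we have $W(\gamma,x,s,\phi)=D(\gamma,x,s)$ if and only if there exists $\phi_D\in\partial D(\gamma,x,s)$ with $\phi\le\phi_D$ componentwise.
   Context: Setup. Let $\mathcal S$ be a finite set and $(s_t)_{t\ge0}$ a Markov chain on $\mathcal S$ with transition probabilities $\pi(s'|s)>0$ for all $s,s'\in\mathcal S$; for $s^t=(s_0,\dots,s_t)\in\mathcal S^{t+1}$, $\mathbb E_{s^t}$ (or $\mathbb E_{s_t}$) denotes expectation over future shocks given $s^t$. Let $\mathcal A\subset\mathbb R^n$ be a finite set, $\mathcal X\subseteq\mathbb R^m$ a countable set, $\zeta:\mathcal X\times\mathcal A\times\mathcal S\to\mathcal X$, $p:\mathcal X\times\mathcal A\times\mathcal S\to\mathbb R$, $r,g^1,\dots,g^I$ bounded real functions on $\mathcal X\times\mathcal A\times\mathcal S$, $\bar g^i\in\mathbb R$, $\beta\in(0,1)$. A plan is $a=(a(s^t))_{t,s^t}$, $a(s^t)\in\mathcal A$, inducing $x(s^0)=x_0$, $x(s^{t+1})=\zeta(x(s^t),a(s^t),s_t)$. $\tilde{\mathcal A}(x,s)=\{a\in\mathcal A:p(x,a,s)\ge0\}$; $\tilde{\mathcal A}^\infty(x_0)$ is the set of plans with $a(s^t)\in\tilde{\mathcal A}(x(s^t),s_t)$ for all $t,s^t$. A plan is feasible for $(x_0,s_0)$ if it lies in $\tilde{\mathcal A}^\infty(x_0)$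 and $\mathbb E_{s_t}\sum_{n\ge0}\beta^ng^i(x(s^{t+n}),a(s^{t+n}),s_{t+n})\ge\bar g^i$ for all $t,s^t,i$. Standing assumption: for every $(x_0,s_0)$ a feasible plan exists. Pre-action histories: $\mathcal H^t=\mathcal S^{t+1}\times\mathcal A^t$. Ex-ante lottery problem. Give $\tilde{\mathcal A}^\infty(x_0)$ the product topology and let $\mathcal P(\tilde{\mathcal A}^\infty(x_0))$ be the set of Borel probability measures on it; a random plan $a\sim P$ is drawn independently of the shocks. $P$ is feasible for $(x_0,s_0)$ if for all $t\ge0$, all $h^t=(s_0,\tilde a_0,\dots,s_{t-1},\tilde a_{t-1},s_t)\in\mathcal H^t$ and all $i$, $\mathbb E^{a\sim P}_{s^t}\big[\mathbf 1\{(a(s^0),\dots,a(s^{t-1}))=(\tilde a_0,\dots,\tilde a_{t-1})\}(\sum_{n\ge0}\beta^ng^i(x(s^{t+n}),a(s^{t+n}),s_{t+n})-\bar g^i)\big]\ge0$ ($s^t$ the shock history in $h^t$). For $\gamma\in\mathbb R^I$, $V(\gamma,x_0,s_0)$ is the maximum of $\mathbb E^{a\sim P}_{s_0}\sum_t\beta^t(r(x(s^t),a(s^t),s_t)+\sum_i\gamma^ig^i(x(s^t),a(s^t),s_t))$ over feasible $P$ (it exists, and for $\gamma\in\mathbb R^I_+$ it equals the dual value function $D(\gamma,x_0,s_0)=\inf_{\lambda}\sup_{a}L$ of the Lagrangian with nonnegative summable history-dependent multipliers). $\gamma\mapsto V(\gamma,x,s)$ is a finite convex function on $\mathbb R^I$;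 $\partial D(\gamma,x,s)$ denotes its subdifferential at $\gamma$. Promised-value problem: $W(\gamma,x_0,s_0,\phi)$ is the supremum of the same objective over feasible $P$ that additionally satisfy $\mathbb E^{a\sim P}_{s_0}\sum_{t\ge0}\beta^tg^i(x(s^t),a(s^t),s_t)\ge\phi^i$ for all $i$ (equal to $-\infty$ if no such $P$ exists). *)

theory Defs
  imports "HOL-Analysis.Analysis" "HOL-Probability.Probability"
begin

text \<open>Shock histories s^t = (s_0,...,s_t) are nonempty lists; the current shock is the last
element. Transition probabilities: pi s s' is the probability of s' given s.\<close>

fun cexp :: "('s::finite \<Rightarrow> 's \<Rightarrow> real) \<Rightarrow> 's list \<Rightarrow> nat \<Rightarrow> ('s list \<Rightarrow> real) \<Rightarrow> real" where
  "cexp \<pi> h 0 f = f h"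
| "cexp \<pi> h (Suc n) f = (\<Sum>s'\<in>UNIV. \<pi> (last h) s' * cexp \<pi> (h @ [s']) n f)"

text \<open>E_{s^t} sum_n beta^n f(s^{t+n}), written as sum_n beta^n E_{s^t} f(s^{t+n})
  (the integrands are bounded, so expectation and sum commute).\<close>
definition disc :: "real \<Rightarrow> ('s::finite \<Rightarrow> 's \<Rightarrow> real) \<Rightarrow> 's list \<Rightarrow> ('s list \<Rightarrow> real) \<Rightarrow> real" where
  "disc \<beta> \<pi> h f = (\<Sum>n. \<beta> ^ n * cexp \<pi> h n f)"

text \<open>State path: x(s^0) = x0, x(s^{k+1}) = zeta(x(s^k), a(s^k), s_k), where s^k = take (k+1) h.\<close>
primrec xk :: "('x \<Rightarrow> 'a \<Rightarrow> 's \<Rightarrow> 'x) \<Rightarrow> ('s list \<Rightarrow> 'a) \<Rightarrow> 'x \<Rightarrow> 's list \<Rightarrow> nat \<Rightarrow> 'x" where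
  "xk \<zeta> a x0 h 0 = x0"
| "xk \<zeta> a x0 h (Suc k) = \<zeta> (xk \<zeta> a x0 h k) (a (take (Suc k) h)) (h ! k)"

definition xp :: "('x \<Rightarrow> 'a \<Rightarrow> 's \<Rightarrow> 'x) \<Rightarrow> ('s list \<Rightarrow> 'a) \<Rightarrow> 'x \<Rightarrow> 's list \<Rightarrow> 'x" where
  "xp \<zeta> a x0 h = xk \<zeta> a x0 h (length h - 1)"

definition flow :: "('x \<Rightarrow> 'a \<Rightarrow> 's \<Rightarrow> 'x) \<Rightarrow> ('s list \<Rightarrow> 'a) \<Rightarrow> 'x \<Rightarrow> ('x \<Rightarrow> 'a \<Rightarrow> 's \<Rightarrow> real) \<Rightarrow> 's list \<Rightarrow> real" where
  "flow \<zeta> a x0 f h = f (xp \<zeta> a x0 h) (a h) (last h)"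

text \<open>The plan space tilde A^infty(x0). The coordinate at the empty list is a dummy coordinate
  (constrained to lie in A only).\<close>
definition plans :: "('x \<Rightarrow> 'a \<Rightarrow> 's \<Rightarrow> 'x) \<Rightarrow> ('x \<Rightarrow> 'a \<Rightarrow> 's \<Rightarrow> real) \<Rightarrow> 'a set \<Rightarrow> 'x \<Rightarrow> ('s list \<Rightarrow> 'a) set" where
  "plans \<zeta> p A x0 = {a. (\<forall>h. a h \<in> A) \<and> (\<forall>h. h \<noteq> [] \<longrightarrow> p (xp \<zeta> a x0 h) (a h) (last h) \<ge> 0)}"

definition det_feasible ::
  "real \<Rightarrow> ('s::finite \<Rightarrow> 's \<Rightarrow> real) \<Rightarrow> ('x \<Rightarrow> 'a \<Rightarrow> 's \<Rightarrow> 'x) \<Rightarrow> ('x \<Rightarrow> 'a \<Rightarrow> 's \<Rightarrow> real) \<Rightarrow> 'a set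
   \<Rightarrow> ('i \<Rightarrow> 'x \<Rightarrow> 'a \<Rightarrow> 's \<Rightarrow> real) \<Rightarrow> ('i \<Rightarrow> real) \<Rightarrow> 'x \<Rightarrow> 's \<Rightarrow> ('s list \<Rightarrow> 'a) \<Rightarrow> bool" where
  "det_feasible \<beta> \<pi> \<zeta> p A g gbar x0 s0 a \<longleftrightarrow>
     a \<in> plans \<zeta> p A x0 \<and>
     (\<forall>h i. h \<noteq> [] \<longrightarrow> hd h = s0 \<longrightarrow> disc \<beta> \<pi> h (flow \<zeta> a x0 (g i)) \<ge> gbar i)"

text \<open>Feasible lottery P for (x0,s0): a Borel probability measure on the plan space
  (product topology, subspace topology) satisfying the ex-ante constraints for every
  pre-action history h^t = (s_0, a_0, ..., a_{t-1}, s_t).\<close>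
definition lottery_feasible ::
  "real \<Rightarrow> ('s::finite \<Rightarrow> 's \<Rightarrow> real) \<Rightarrow> ('x \<Rightarrow> 'a::topological_space \<Rightarrow> 's \<Rightarrow> 'x) \<Rightarrow> ('x \<Rightarrow> 'a \<Rightarrow> 's \<Rightarrow> real)
   \<Rightarrow> 'a set \<Rightarrow> ('i \<Rightarrow> 'x \<Rightarrow> 'a \<Rightarrow> 's \<Rightarrow> real) \<Rightarrow> ('i \<Rightarrow> real) \<Rightarrow> 'x \<Rightarrow> 's
   \<Rightarrow> ('s list \<Rightarrow> 'a) measure \<Rightarrow> bool" where
  "lottery_feasible \<beta> \<pi> \<zeta> p A g gbar x0 s0 P \<longleftrightarrow>
     prob_space P \<and> sets P = sets (restrict_space borel (plans \<zeta> p A x0)) \<and>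
     (\<forall>h atil i. h \<noteq> [] \<longrightarrow> hd h = s0 \<longrightarrow> length atil = length h - 1 \<longrightarrow> set atil \<subseteq> A \<longrightarrow>
        (\<integral>a. (if (\<forall>k < length h - 1. a (take (Suc k) h) = atil ! k) then 1 else 0)
               * (disc \<beta> \<pi> h (flow \<zeta> a x0 (g i)) - gbar i) \<partial>P) \<ge> 0)"

definition objective ::
  "real \<Rightarrow> ('s::finite \<Rightarrow> 's \<Rightarrow> real) \<Rightarrow> ('x \<Rightarrow> 'a \<Rightarrow> 's \<Rightarrow> 'x) \<Rightarrow> ('x \<Rightarrow> 'a \<Rightarrow> 's \<Rightarrow> real)
   \<Rightarrow> ('i::finite \<Rightarrow> 'x \<Rightarrow> 'a \<Rightarrow> 's \<Rightarrow> real) \<Rightarrow> real^'i \<Rightarrow> 'x \<Rightarrow> 's \<Rightarrow> ('s list \<Rightarrow> 'a) measure \<Rightarrow> real" where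
  "objective \<beta> \<pi> \<zeta> r g \<gamma> x0 s0 P =
     (\<integral>a. disc \<beta> \<pi> [s0] (flow \<zeta> a x0 (\<lambda>x b s. r x b s + (\<Sum>i\<in>UNIV. \<gamma> $ i * g i x b s))) \<partial>P)"

text \<open>V(gamma,x0,s0): value of the ex-ante lottery problem (a maximum; written as a supremum).\<close>
definition Vval ::
  "real \<Rightarrow> ('s::finite \<Rightarrow> 's \<Rightarrow> real) \<Rightarrow> ('x \<Rightarrow> 'a::topological_space \<Rightarrow> 's \<Rightarrow> 'x) \<Rightarrow> ('x \<Rightarrow> 'a \<Rightarrow> 's \<Rightarrow> real)
   \<Rightarrow> 'a set \<Rightarrow> ('x \<Rightarrow> 'a \<Rightarrow> 's \<Rightarrow> real) \<Rightarrow> ('i::finite \<Rightarrow> 'x \<Rightarrow> 'a \<Rightarrow> 's \<Rightarrow> real) \<Rightarrow> ('i \<Rightarrow> real)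
   \<Rightarrow> real^'i \<Rightarrow> 'x \<Rightarrow> 's \<Rightarrow> real" where
  "Vval \<beta> \<pi> \<zeta> p A r g gbar \<gamma> x0 s0 =
     Sup (objective \<beta> \<pi> \<zeta> r g \<gamma> x0 s0 ` {P. lottery_feasible \<beta> \<pi> \<zeta> p A g gbar x0 s0 P})"

text \<open>W(gamma,x0,s0,phi): promised-value problem (supremum in the extended reals, -infinity if empty).\<close>
definition Wval ::
  "real \<Rightarrow> ('s::finite \<Rightarrow> 's \<Rightarrow> real) \<Rightarrow> ('x \<Rightarrow> 'a::topological_space \<Rightarrow> 's \<Rightarrow> 'x) \<Rightarrow> ('x \<Rightarrow> 'a \<Rightarrow> 's \<Rightarrow> real)
   \<Rightarrow> 'a set \<Rightarrow> ('x \<Rightarrow> 'a \<Rightarrow> 's \<Rightarrow> real) \<Rightarrow> ('i::finite \<Rightarrow> 'x \<Rightarrow> 'a \<Rightarrow> 's \<Rightarrow> real) \<Rightarrow> ('i \<Rightarrow> real)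
   \<Rightarrow> real^'i \<Rightarrow> 'x \<Rightarrow> 's \<Rightarrow> real^'i \<Rightarrow> ereal" where
  "Wval \<beta> \<pi> \<zeta> p A r g gbar \<gamma> x0 s0 \<phi> =
     Sup ((\<lambda>P. ereal (objective \<beta> \<pi> \<zeta> r g \<gamma> x0 s0 P)) `
       {P. lottery_feasible \<beta> \<pi> \<zeta> p A g gbar x0 s0 P \<and>
           (\<forall>i. (\<integral>a. disc \<beta> \<pi> [s0] (flow \<zeta> a x0 (g i)) \<partial>P) \<ge> \<phi> $ i)})"

definition subdifferential :: "(real^'i \<Rightarrow> real) \<Rightarrow> real^'i \<Rightarrow> (real^'i) set" where
  "subdifferential f y = {d. \<forall>y'. f y' \<ge> f y + d \<bullet> (y' - y)}"

end

theory Submission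
  imports Defs
begin


lemma xk_cong:
  assumes "\<And>k'. k' < k \<Longrightarrow> a (take (Suc k') h) = b (take (Suc k') h)"
  shows "xk \<zeta> a x0 h k = xk \<zeta> b x0 h k"
  using assms by (induction k) auto

lemma xk_in:
  assumes "x0 \<in> X" "\<And>y c s. y \<in> X \<Longrightarrow> c \<in> A \<Longrightarrow> \<zeta> y c s \<in> X" "\<And>h. a h \<in> A"
  shows "xk \<zeta> a x0 h k \<in> X"
  using assms by (induction k) auto

lemma xp_in:
  assumes "x0 \<in> X" "\<And>y c s. y \<in> X \<Longrightarrow> c \<in> A \<Longrightarrow> \<zeta> y c s \<in> X" "\<And>h. a h \<in> A"
  shows "xp \<zeta> a x0 h \<in> X"
  unfolding xp_def using xk_in[OF assms] .

lemma xp_cong: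
  assumes "\<And>h'. length h' \<le> length h \<Longrightarrow> a h' = b h'"
  shows "xp \<zeta> a x0 h = xp \<zeta> b x0 h"
  unfolding xp_def by (rule xk_cong) (auto intro!: assms)

lemma flow_cong:
  assumes "\<And>h'. length h' \<le> length h \<Longrightarrow> a h' = b h'"
  shows "flow \<zeta> a x0 f h = flow \<zeta> b x0 f h"
proof -
  have "xp \<zeta> a x0 h = xp \<zeta> b x0 h" by (rule xp_cong) (rule assms)
  then show ?thesis unfolding flow_def using assms[of h] by simp
qed

lemma cexp_cong:
  assumes "\<And>h'. length h' = length h + n \<Longrightarrow> F h' = G h'"
  shows "cexp \<pi> h n F = cexp \<pi> h n G"
  using assms
proof (induction n arbitrary: h)
  case 0
  then show ?case by simp
next
  case (Suc n)
  show ?case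
    by (simp, rule sum.cong, simp, rule arg_cong[where f="\<lambda>t. _ * t"], rule Suc.IH) (use Suc.prems in auto)
qed

lemma cexp_bound:
  assumes pos: "\<And>s s'. \<pi> s s' \<ge> 0" and sum1: "\<And>s. (\<Sum>s'\<in>UNIV. \<pi> s s') = 1"
    and b: "\<And>h'. \<bar>F h'\<bar> \<le> B"
  shows "\<bar>cexp \<pi> h n F\<bar> \<le> B"
proof (induction n arbitrary: h)
  case 0
  then show ?case using b by simp
next
  case (Suc n)
  have "\<bar>cexp \<pi> h (Suc n) F\<bar> \<le> (\<Sum>s'\<in>UNIV. \<bar>\<pi> (last h) s' * cexp \<pi> (h @ [s']) n F\<bar>)"
    by (simp add: sum_abs)
  also have "\<dots> \<le> (\<Sum>s'\<in>UNIV. \<pi> (last h) s' * B)"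
    by (rule sum_mono) (simp add: abs_mult pos mult_left_mono Suc.IH)
  also have "\<dots> = B" by (simp add: sum_distrib_right[symmetric] sum1)
  finally show ?case .
qed

lemma cexp_lin:
  "cexp \<pi> h n (\<lambda>h'. c * F h' + G h') = c * cexp \<pi> h n F + cexp \<pi> h n G"
  by (induction n arbitrary: h) (simp_all add: algebra_simps sum.distrib sum_distrib_left)

lemma cexp_sum:
  "finite I \<Longrightarrow> cexp \<pi> h n (\<lambda>h'. \<Sum>i\<in>I. F i h') = (\<Sum>i\<in>I. cexp \<pi> h n (F i))"
proof (induction n arbitrary: h)
  case 0 then show ?case by simp
next
  case (Suc n)
  then show ?case by (simp add: sum_distrib_left sum.swap[of _ I])
qed

lemma disc_summable:
  assumes pos: "\<And>s s'. \<pi> s s' \<ge> 0" and sum1: "\<And>s. (\<Sum>s'\<in>UNIV. \<pi> s s') = 1"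
    and b: "\<And>h'. \<bar>F h'\<bar> \<le> B" and beta: "0 \<le> \<beta>" "\<beta> < 1"
  shows "summable (\<lambda>n. \<beta> ^ n * cexp \<pi> h n F)"
proof (rule summable_comparison_test[where g="\<lambda>n. B * \<beta> ^ n"])
  show "\<exists>N. \<forall>n\<ge>N. norm (\<beta> ^ n * cexp \<pi> h n F) \<le> B * \<beta> ^ n"
  proof (intro exI allI impI)
    fix n :: nat
    have "\<bar>cexp \<pi> h n F\<bar> \<le> B" by (rule cexp_bound[OF pos sum1 b])
    then show "norm (\<beta> ^ n * cexp \<pi> h n F) \<le> B * \<beta> ^ n"
      using beta by (simp add: abs_mult mult.commute[of B] mult_left_mono)
  qed
  show "summable (\<lambda>n. B * \<beta> ^ n)" using beta by (intro summable_mult summable_geometric) auto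
qed



locale ctx =
  fixes \<beta> :: real and \<pi> :: "'s::finite \<Rightarrow> 's \<Rightarrow> real" and \<zeta> :: "'x \<Rightarrow> real^'n \<Rightarrow> 's \<Rightarrow> 'x"
    and p :: "'x \<Rightarrow> real^'n \<Rightarrow> 's \<Rightarrow> real" and A :: "(real^'n) set" and X :: "'x set" and x0 :: 'x
  assumes pi_nn: "\<And>s s'. \<pi> s s' \<ge> 0" and pi_sum: "\<And>s. (\<Sum>s'\<in>UNIV. \<pi> s s') = 1"
    and A_fin: "finite A" and zeta_X: "\<And>y c s. y \<in> X \<Longrightarrow> c \<in> A \<Longrightarrow> \<zeta> y c s \<in> X"
    and beta: "0 < \<beta>" "\<beta> < 1" and x0_X: "x0 \<in> X"
begin

abbreviation "Om \<equiv> plans \<zeta> p A x0"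
abbreviation "M0 \<equiv> restrict_space borel Om"

definition cyl :: "'s list set \<Rightarrow> ('s list \<Rightarrow> real^'n) \<Rightarrow> ('s list \<Rightarrow> real^'n) set" where
  "cyl J \<omega> = {a \<in> Om. restrict a J = \<omega>}"

definition depOn :: "'s list set \<Rightarrow> (('s list \<Rightarrow> real^'n) \<Rightarrow> real) \<Rightarrow> bool" where
  "depOn J F \<longleftrightarrow> (\<forall>a\<in>Om. \<forall>b\<in>Om. restrict a J = restrict b J \<longrightarrow> F a = F b)"

definition pick :: "'s list set \<Rightarrow> ('s list \<Rightarrow> real^'n) \<Rightarrow> ('s list \<Rightarrow> real^'n)" where
  "pick J \<omega> = (SOME a. a \<in> cyl J \<omega>)"

definition PS :: "('s list \<Rightarrow> real^'n) measure set" where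
  "PS = {P. prob_space P \<and> sets P = sets M0}"

lemma Om_A: "a \<in> Om \<Longrightarrow> a h \<in> A"
  by (simp add: plans_def)

lemma restrict_in: "a \<in> Om \<Longrightarrow> restrict a J \<in> PiE J (\<lambda>_. A)"
  using Om_A by auto

lemma space_M0: "space M0 = Om"
  by (simp add: space_restrict_space)

lemma sets_borel_fun: "sets (borel :: ('s list \<Rightarrow> real^'n) measure) = sets (PiM UNIV (\<lambda>_. borel))"
  by (rule sets_PiM_equal_borel[symmetric])

lemma closed_cylset: "closed {a::'s list \<Rightarrow> real^'n. restrict a J = \<omega>}"
proof -
  have "continuous_on UNIV (\<lambda>a::'s list \<Rightarrow> real^'n. restrict a J)"
    apply (rule continuous_on_coordinatewise_then_product)
    subgoal for i by (cases "i \<in> J") (simp_all add: continuous_on_product_coordinates)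
    done
  then show ?thesis
    by (intro closed_Collect_eq) auto
qed

lemma cylset_borel: "{a::'s list \<Rightarrow> real^'n. restrict a J = \<omega>} \<in> sets borel"
  by (rule borel_closed[OF closed_cylset])

lemma cyl_sets: "cyl J \<omega> \<in> sets M0"
proof -
  have "cyl J \<omega> = Om \<inter> {a. restrict a J = \<omega>}" by (auto simp: cyl_def)
  moreover have "Om \<inter> {a. restrict a J = \<omega>} \<in> sets M0"
    unfolding sets_restrict_space using cylset_borel by (rule imageI)
  ultimately show ?thesis by (simp only:)
qed

lemma PS_space: assumes "P \<in> PS" shows "space P = Om"
proof -
  have "sets P = sets M0" using assms unfolding PS_def by simp
  then have "space P = space M0" by (rule sets_eq_imp_space_eq)
  then show ?thesis by (simp only: space_M0)
qed

lemma PS_sets: "P \<in> PS \<Longrightarrow> sets P = sets M0"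
  unfolding PS_def by simp

lemma PS_prob: "P \<in> PS \<Longrightarrow> prob_space P"
  unfolding PS_def by simp

lemma cyl_sets_P: "P \<in> PS \<Longrightarrow> cyl J \<omega> \<in> sets P"
  using PS_sets cyl_sets by blast

lemma pick_cyl: assumes "a \<in> cyl J \<omega>" shows "pick J \<omega> \<in> cyl J \<omega>"
  unfolding pick_def using assms by (rule someI[where P="\<lambda>b. b \<in> cyl J \<omega>"])

lemma dep_repr:
  assumes "finite J" "depOn J F" "a \<in> Om"
  shows "F a = (\<Sum>\<omega>\<in>PiE J (\<lambda>_. A). F (pick J \<omega>) * indicator (cyl J \<omega>) a)"
proof -
  let ?w = "restrict a J"
  have w: "?w \<in> PiE J (\<lambda>_. A)" using restrict_in[OF assms(3)] .
  have ac: "a \<in> cyl J ?w" using assms(3) by (simp add: cyl_def)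
  have "(\<Sum>\<omega>\<in>PiE J (\<lambda>_. A). F (pick J \<omega>) * indicator (cyl J \<omega>) a) = F (pick J ?w)"
  proof (subst sum.remove[of _ ?w])
    show "finite (PiE J (\<lambda>_. A))" using assms(1) A_fin by (simp add: finite_PiE)
    show "?w \<in> PiE J (\<lambda>_. A)" by (fact w)
    have "(\<Sum>\<omega>\<in>PiE J (\<lambda>_. A) - {?w}. F (pick J \<omega>) * indicator (cyl J \<omega>) a) = 0"
    proof (rule sum.neutral, rule ballI)
      fix \<omega> assume "\<omega> \<in> PiE J (\<lambda>_. A) - {?w}"
      then have "a \<notin> cyl J \<omega>" unfolding cyl_def by auto
      then show "F (pick J \<omega>) * indicator (cyl J \<omega>) a = 0" by simp
    qed
    moreover have "indicator (cyl J ?w) a = (1::real)" using ac by simp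
    ultimately show "F (pick J ?w) * indicator (cyl J ?w) a + (\<Sum>\<omega>\<in>PiE J (\<lambda>_. A) - {?w}. F (pick J \<omega>) * indicator (cyl J \<omega>) a) = F (pick J ?w)"
      by (metis add.right_neutral mult.right_neutral)
  qed
  also have "\<dots> = F a"
  proof -
    have pc: "pick J ?w \<in> Om" "restrict (pick J ?w) J = restrict a J"
      using pick_cyl[OF ac] unfolding cyl_def by blast+
    then show ?thesis using assms(2,3) unfolding depOn_def by blast
  qed
  finally show ?thesis by (rule sym)
qed

lemma dep_measurable:
  assumes "finite J" "depOn J F" "P \<in> PS"
  shows "F \<in> borel_measurable P"
proof -
  have "(\<lambda>a. \<Sum>\<omega>\<in>PiE J (\<lambda>_. A). F (pick J \<omega>) * indicator (cyl J \<omega>) a) \<in> borel_measurable P"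
    using cyl_sets_P[OF assms(3)] by (intro borel_measurable_sum borel_measurable_times borel_measurable_indicator borel_measurable_const) 
  then show ?thesis
    by (rule measurable_cong[THEN iffD1, rotated]) (simp add: dep_repr[OF assms(1,2)] PS_space[OF assms(3)])
qed

lemma dep_integral:
  assumes "finite J" "depOn J F" "P \<in> PS"
  shows "integral\<^sup>L P F = (\<Sum>\<omega>\<in>PiE J (\<lambda>_. A). F (pick J \<omega>) * measure P (cyl J \<omega>))"
proof -
  interpret prob_space P using PS_prob[OF assms(3)] .
  have "integral\<^sup>L P F = integral\<^sup>L P (\<lambda>a. \<Sum>\<omega>\<in>PiE J (\<lambda>_. A). F (pick J \<omega>) * indicator (cyl J \<omega>) a)"
    by (rule Bochner_Integration.integral_cong[OF refl]) (use dep_repr[OF assms(1,2)] PS_space[OF assms(3)] in auto)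
  also have "\<dots> = (\<Sum>\<omega>\<in>PiE J (\<lambda>_. A). F (pick J \<omega>) * measure P (cyl J \<omega>))"
    using cyl_sets_P[OF assms(3)]
    by (subst Bochner_Integration.integral_sum) (auto intro!: integrable_real_indicator simp: less_top[symmetric])
  finally show ?thesis .
qed

end


context ctx
begin

definition good :: "(('s list \<Rightarrow> real^'n) \<Rightarrow> real) \<Rightarrow> bool" where
  "good F \<longleftrightarrow> (\<exists>B. \<forall>a\<in>Om. \<bar>F a\<bar> \<le> B) \<and>
     (\<forall>e>0. \<exists>J G. finite J \<and> depOn J G \<and> (\<forall>a\<in>Om. \<bar>F a - G a\<bar> \<le> e))"

definition convm :: "(nat \<Rightarrow> ('s list \<Rightarrow> real^'n) measure) \<Rightarrow> ('s list \<Rightarrow> real^'n) measure \<Rightarrow> bool" where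
  "convm Qk Q \<longleftrightarrow> (\<forall>J \<omega>. finite J \<longrightarrow> (\<lambda>k. measure (Qk k) (cyl J \<omega>)) \<longlonglongrightarrow> measure Q (cyl J \<omega>))"

lemma good_measurable:
  assumes "good F" "P \<in> PS"
  shows "F \<in> borel_measurable P"
proof -
  have "\<forall>n. \<exists>JG. finite (fst JG) \<and> depOn (fst JG) (snd JG) \<and> (\<forall>a\<in>Om. \<bar>F a - snd JG a\<bar> \<le> 1 / Suc n)"
  proof
    fix n :: nat
    have "(0::real) < 1 / Suc n" by simp
    then obtain J G where "finite J" "depOn J G" "\<forall>a\<in>Om. \<bar>F a - G a\<bar> \<le> 1 / Suc n"
      using assms(1) unfolding good_def by blast
    then show "\<exists>JG. finite (fst JG) \<and> depOn (fst JG) (snd JG) \<and> (\<forall>a\<in>Om. \<bar>F a - snd JG a\<bar> \<le> 1 / Suc n)"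
      by (intro exI[of _ "(J, G)"]) simp
  qed
  from choice[OF this] obtain JG where JG: "\<And>n. finite (fst (JG n))" "\<And>n. depOn (fst (JG n)) (snd (JG n))"
    "\<And>n a. a \<in> Om \<Longrightarrow> \<bar>F a - snd (JG n) a\<bar> \<le> 1 / Suc n" by blast
  show ?thesis
  proof (rule borel_measurable_LIMSEQ_real[where u="\<lambda>n. snd (JG n)"])
    show "snd (JG n) \<in> borel_measurable P" for n by (rule dep_measurable[OF JG(1,2) assms(2)])
    fix a assume "a \<in> space P"
    then have a: "a \<in> Om" using PS_space[OF assms(2)] by simp
    show "(\<lambda>n. snd (JG n) a) \<longlonglongrightarrow> F a"
    proof (rule LIMSEQ_I)
      fix r :: real assume "0 < r"
      then obtain N where N: "1 / Suc N < r" using nat_approx_posE by blast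
      show "\<exists>no. \<forall>n\<ge>no. norm (snd (JG n) a - F a) < r"
      proof (intro exI allI impI)
        fix n assume "N \<le> n"
        have "1 / real (Suc n) \<le> 1 / Suc N" using \<open>N \<le> n\<close> by (simp add: frac_le)
        then show "norm (snd (JG n) a - F a) < r" using JG(3)[OF a, of n] N by (simp add: abs_minus_commute)
      qed
    qed
  qed
qed

lemma good_bounded: "good F \<Longrightarrow> \<exists>B. \<forall>a\<in>Om. \<bar>F a\<bar> \<le> B"
  unfolding good_def by blast

lemma good_integrable:
  assumes "good F" "P \<in> PS"
  shows "integrable P F"
proof -
  interpret prob_space P using PS_prob[OF assms(2)] .
  obtain B where B: "\<forall>a\<in>Om. \<bar>F a\<bar> \<le> B" using good_bounded[OF assms(1)] by blast
  show ?thesis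
    by (rule integrable_const_bound[where B=B])
       (use B PS_space[OF assms(2)] good_measurable[OF assms] in auto)
qed

lemma integral_close:
  fixes F G :: "('s list \<Rightarrow> real^'n) \<Rightarrow> real"
  assumes "P \<in> PS" "integrable P F" "integrable P G" "\<And>a. a \<in> Om \<Longrightarrow> \<bar>F a - G a\<bar> \<le> e"
  shows "\<bar>integral\<^sup>L P F - integral\<^sup>L P G\<bar> \<le> e"
proof -
  interpret prob_space P using PS_prob[OF assms(1)] .
  have "\<bar>integral\<^sup>L P F - integral\<^sup>L P G\<bar> = \<bar>integral\<^sup>L P (\<lambda>a. F a - G a)\<bar>"
    using assms(2,3) by simp
  also have "\<dots> \<le> integral\<^sup>L P (\<lambda>a. e)"
  proof -
    have "\<bar>integral\<^sup>L P (\<lambda>a. F a - G a)\<bar> \<le> integral\<^sup>L P (\<lambda>a. \<bar>F a - G a\<bar>)"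
      by (rule integral_abs_bound)
    also have "\<dots> \<le> integral\<^sup>L P (\<lambda>a. e)"
      by (rule integral_mono) (use assms PS_space[OF assms(1)] in auto)
    finally show ?thesis .
  qed
  also have "\<dots> = e" by (simp add: prob_space)
  finally show ?thesis .
qed

lemma dep_integrable:
  assumes "finite J" "depOn J G" "P \<in> PS"
  shows "integrable P G"
proof -
  interpret prob_space P using PS_prob[OF assms(3)] .
  let ?B = "\<Sum>\<omega>\<in>PiE J (\<lambda>_. A). \<bar>G (pick J \<omega>)\<bar>"
  have "\<bar>G a\<bar> \<le> ?B" if "a \<in> Om" for a
  proof -
    have "\<bar>G a\<bar> = \<bar>\<Sum>\<omega>\<in>PiE J (\<lambda>_. A). G (pick J \<omega>) * indicator (cyl J \<omega>) a\<bar>"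
      using dep_repr[OF assms(1,2) that] by simp
    also have "\<dots> \<le> (\<Sum>\<omega>\<in>PiE J (\<lambda>_. A). \<bar>G (pick J \<omega>) * indicator (cyl J \<omega>) a\<bar>)"
      by (rule sum_abs)
    also have "\<dots> \<le> ?B"
      by (rule sum_mono) (simp add: abs_mult indicator_def)
    finally show ?thesis .
  qed
  then show ?thesis
    by (intro integrable_const_bound[where B="?B"])
       (use PS_space[OF assms(3)] dep_measurable[OF assms] in auto)
qed

lemma conv_dep:
  assumes "\<And>k. Qk k \<in> PS" "Q \<in> PS" "convm Qk Q" "finite J" "depOn J G"
  shows "(\<lambda>k. integral\<^sup>L (Qk k) G) \<longlonglongrightarrow> integral\<^sup>L Q G"
proof -
  have "(\<lambda>k. \<Sum>\<omega>\<in>PiE J (\<lambda>_. A). G (pick J \<omega>) * measure (Qk k) (cyl J \<omega>))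
     \<longlonglongrightarrow> (\<Sum>\<omega>\<in>PiE J (\<lambda>_. A). G (pick J \<omega>) * measure Q (cyl J \<omega>))"
    using assms(3,4) unfolding convm_def by (intro tendsto_sum tendsto_mult_left) auto
  then show ?thesis
    using dep_integral[OF assms(4,5) assms(1)] dep_integral[OF assms(4,5) assms(2)] by simp
qed

lemma conv_good:
  assumes Qk: "\<And>k. Qk k \<in> PS" and Q: "Q \<in> PS" and cv: "convm Qk Q" and F: "good F"
  shows "(\<lambda>k. integral\<^sup>L (Qk k) F) \<longlonglongrightarrow> integral\<^sup>L Q F"
proof (rule LIMSEQ_I)
  fix r :: real assume r: "0 < r"
  then have "r / 4 > 0" by simp
  then obtain J G where JG: "finite J" "depOn J G" "\<forall>a\<in>Om. \<bar>F a - G a\<bar> \<le> r / 4"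
    using F unfolding good_def by blast
  have "(\<lambda>k. integral\<^sup>L (Qk k) G) \<longlonglongrightarrow> integral\<^sup>L Q G" by (rule conv_dep[OF Qk Q cv JG(1,2)])
  from LIMSEQ_D[OF this \<open>r/4 > 0\<close>] obtain N where N: "\<And>k. k \<ge> N \<Longrightarrow> norm (integral\<^sup>L (Qk k) G - integral\<^sup>L Q G) < r / 4"
    by blast
  show "\<exists>no. \<forall>n\<ge>no. norm (integral\<^sup>L (Qk n) F - integral\<^sup>L Q F) < r"
  proof (intro exI allI impI)
    fix k assume "N \<le> k"
    have a: "\<bar>integral\<^sup>L (Qk k) F - integral\<^sup>L (Qk k) G\<bar> \<le> r / 4"
      by (rule integral_close[OF Qk good_integrable[OF F Qk] dep_integrable[OF JG(1,2) Qk]]) (use JG(3) in auto)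
    have b: "\<bar>integral\<^sup>L Q F - integral\<^sup>L Q G\<bar> \<le> r / 4"
      by (rule integral_close[OF Q good_integrable[OF F Q] dep_integrable[OF JG(1,2) Q]]) (use JG(3) in auto)
    have c: "\<bar>integral\<^sup>L (Qk k) G - integral\<^sup>L Q G\<bar> < r / 4" using N[OF \<open>N \<le> k\<close>] by simp
    show "norm (integral\<^sup>L (Qk k) F - integral\<^sup>L Q F) < r"
      using a b c r unfolding real_norm_def by linarith
  qed
qed

end


context ctx
begin

lemma restrict_eq_iff: "restrict a J = restrict b J \<longleftrightarrow> (\<forall>j\<in>J. a j = b j)"
proof
  assume "restrict a J = restrict b J"
  then show "\<forall>j\<in>J. a j = b j" by (metis restrict_apply')
next
  assume "\<forall>j\<in>J. a j = b j"
  then show "restrict a J = restrict b J" by (intro ext) (simp add: restrict_def)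
qed

lemma depOn_iff: "depOn J F \<longleftrightarrow> (\<forall>a\<in>Om. \<forall>b\<in>Om. (\<forall>j\<in>J. a j = b j) \<longrightarrow> F a = F b)"
  unfolding depOn_def restrict_eq_iff ..

lemma depOn_mono: "J \<subseteq> J' \<Longrightarrow> depOn J F \<Longrightarrow> depOn J' F"
  unfolding depOn_iff by blast

lemma depOn_add: "depOn J F \<Longrightarrow> depOn J G \<Longrightarrow> depOn J (\<lambda>a. F a + G a)"
  unfolding depOn_iff by metis

lemma depOn_mult: "depOn J F \<Longrightarrow> depOn J G \<Longrightarrow> depOn J (\<lambda>a. F a * G a)"
  unfolding depOn_iff by metis

lemma depOn_const: "depOn J (\<lambda>a. c)"
  unfolding depOn_iff by simp

lemma depOn_sum: "finite I \<Longrightarrow> (\<And>i. i \<in> I \<Longrightarrow> depOn J (F i)) \<Longrightarrow> depOn J (\<lambda>a. \<Sum>i\<in>I. F i a)"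
  unfolding depOn_iff by (metis (no_types, lifting) sum.cong)

lemma good_const: "good (\<lambda>a. c)"
  unfolding good_def
proof (intro conjI allI impI)
  show "\<exists>B. \<forall>a\<in>Om. \<bar>c\<bar> \<le> B" by blast
  fix e :: real assume "0 < e"
  then show "\<exists>J G. finite J \<and> depOn J G \<and> (\<forall>a\<in>Om. \<bar>c - G a\<bar> \<le> e)"
    by (intro exI[of _ "{}"] exI[of _ "\<lambda>a. c"]) (simp add: depOn_const)
qed

lemma good_add:
  assumes F: "good F" and G: "good G"
  shows "good (\<lambda>a. F a + G a)"
  unfolding good_def
proof (intro conjI allI impI)
  obtain B1 B2 where "\<forall>a\<in>Om. \<bar>F a\<bar> \<le> B1" "\<forall>a\<in>Om. \<bar>G a\<bar> \<le> B2"
    using F G unfolding good_def by blast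
  then show "\<exists>B. \<forall>a\<in>Om. \<bar>F a + G a\<bar> \<le> B"
    by (intro exI[of _ "B1 + B2"]) (auto intro: order.trans[OF abs_triangle_ineq] add_mono)
  fix e :: real assume "0 < e"
  then have "e / 2 > 0" by simp
  then obtain J1 G1 J2 G2 where 1: "finite J1" "depOn J1 G1" "\<forall>a\<in>Om. \<bar>F a - G1 a\<bar> \<le> e / 2"
    and 2: "finite J2" "depOn J2 G2" "\<forall>a\<in>Om. \<bar>G a - G2 a\<bar> \<le> e / 2"
    using F G unfolding good_def by meson
  show "\<exists>J H. finite J \<and> depOn J H \<and> (\<forall>a\<in>Om. \<bar>F a + G a - H a\<bar> \<le> e)"
  proof (intro exI[of _ "J1 \<union> J2"] exI[of _ "\<lambda>a. G1 a + G2 a"] conjI)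
    show "finite (J1 \<union> J2)" using 1 2 by simp
    show "depOn (J1 \<union> J2) (\<lambda>a. G1 a + G2 a)"
      by (intro depOn_add depOn_mono[OF _ 1(2)] depOn_mono[OF _ 2(2)]) auto
    show "\<forall>a\<in>Om. \<bar>F a + G a - (G1 a + G2 a)\<bar> \<le> e"
    proof
      fix a assume "a \<in> Om"
      then have "\<bar>F a - G1 a\<bar> \<le> e / 2" "\<bar>G a - G2 a\<bar> \<le> e / 2" using 1(3) 2(3) by auto
      then show "\<bar>F a + G a - (G1 a + G2 a)\<bar> \<le> e" by linarith
    qed
  qed
qed

lemma good_mult_dep:
  assumes H: "finite J" "depOn J H" "\<And>a. a \<in> Om \<Longrightarrow> \<bar>H a\<bar> \<le> 1" and F: "good F"
  shows "good (\<lambda>a. H a * F a)"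
  unfolding good_def
proof (intro conjI allI impI)
  obtain B where B: "\<forall>a\<in>Om. \<bar>F a\<bar> \<le> B" using F unfolding good_def by blast
  show "\<exists>B. \<forall>a\<in>Om. \<bar>H a * F a\<bar> \<le> B"
  proof (intro exI ballI)
    fix a assume a: "a \<in> Om"
    have "\<bar>H a * F a\<bar> = \<bar>H a\<bar> * \<bar>F a\<bar>" by (simp add: abs_mult)
    also have "\<dots> \<le> 1 * B" using H(3)[OF a] B a by (intro mult_mono) auto
    finally show "\<bar>H a * F a\<bar> \<le> B" by simp
  qed
  fix e :: real assume "0 < e"
  then obtain J1 G1 where 1: "finite J1" "depOn J1 G1" "\<forall>a\<in>Om. \<bar>F a - G1 a\<bar> \<le> e"
    using F unfolding good_def by meson
  show "\<exists>J' G. finite J' \<and> depOn J' G \<and> (\<forall>a\<in>Om. \<bar>H a * F a - G a\<bar> \<le> e)"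
  proof (intro exI[of _ "J \<union> J1"] exI[of _ "\<lambda>a. H a * G1 a"] conjI)
    show "finite (J \<union> J1)" using 1 H by simp
    show "depOn (J \<union> J1) (\<lambda>a. H a * G1 a)"
      by (intro depOn_mult depOn_mono[OF _ 1(2)] depOn_mono[OF _ H(2)]) auto
    show "\<forall>a\<in>Om. \<bar>H a * F a - H a * G1 a\<bar> \<le> e"
    proof
      fix a assume a: "a \<in> Om"
      have "\<bar>H a * F a - H a * G1 a\<bar> = \<bar>H a\<bar> * \<bar>F a - G1 a\<bar>" by (simp add: abs_mult[symmetric] right_diff_distrib)
      also have "\<dots> \<le> 1 * e" using H(3)[OF a] 1(3) a by (intro mult_mono) auto
      finally show "\<bar>H a * F a - H a * G1 a\<bar> \<le> e" by simp
    qed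
  qed
qed

lemma good_scale:
  assumes "good F" shows "good (\<lambda>a. c * F a)"
proof (cases "c = 0")
  case True then show ?thesis using good_const[of 0] by simp
next
  case False
  have "good (\<lambda>a. (c / \<bar>c\<bar>) * (\<bar>c\<bar> * F a))"
  proof (rule good_mult_dep[where J="{}"])
    show "depOn {} (\<lambda>a. c / \<bar>c\<bar>)" by (rule depOn_const)
    show "\<bar>c / \<bar>c\<bar>\<bar> \<le> 1" for a using False by simp
    show "good (\<lambda>a. \<bar>c\<bar> * F a)"
      unfolding good_def
    proof (intro conjI allI impI)
      obtain B where B: "\<forall>a\<in>Om. \<bar>F a\<bar> \<le> B" using assms unfolding good_def by blast
      then show "\<exists>B. \<forall>a\<in>Om. \<bar>\<bar>c\<bar> * F a\<bar> \<le> B"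
        by (intro exI[of _ "\<bar>c\<bar> * B"]) (auto simp: abs_mult intro: mult_left_mono)
      fix e :: real assume "0 < e"
      then have "e / \<bar>c\<bar> > 0" using False by simp
      then obtain J1 G1 where 1: "finite J1" "depOn J1 G1" "\<forall>a\<in>Om. \<bar>F a - G1 a\<bar> \<le> e / \<bar>c\<bar>"
        using assms unfolding good_def by meson
      show "\<exists>J G. finite J \<and> depOn J G \<and> (\<forall>a\<in>Om. \<bar>\<bar>c\<bar> * F a - G a\<bar> \<le> e)"
      proof (intro exI[of _ J1] exI[of _ "\<lambda>a. \<bar>c\<bar> * G1 a"] conjI ballI)
        show "finite J1" by (fact 1)
        show "depOn J1 (\<lambda>a. \<bar>c\<bar> * G1 a)" by (intro depOn_mult depOn_const 1)
        fix a assume "a \<in> Om"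
        then have "\<bar>F a - G1 a\<bar> \<le> e / \<bar>c\<bar>" using 1 by auto
        then have "\<bar>c\<bar> * \<bar>F a - G1 a\<bar> \<le> e" using False by (simp add: field_simps)
        then show "\<bar>\<bar>c\<bar> * F a - \<bar>c\<bar> * G1 a\<bar> \<le> e" by (simp add: abs_mult[symmetric] right_diff_distrib)
      qed
    qed
  qed simp
  then show ?thesis using False by simp
qed

lemma good_sum: "finite I \<Longrightarrow> (\<And>i. i \<in> I \<Longrightarrow> good (F i)) \<Longrightarrow> good (\<lambda>a. \<Sum>i\<in>I. F i a)"
proof (induction I rule: finite_induct)
  case empty then show ?case using good_const[of 0] by simp
next
  case (insert i I)
  then show ?case by (simp add: good_add)
qed

lemma good_diff: "good F \<Longrightarrow> good G \<Longrightarrow> good (\<lambda>a. F a - G a)"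
  using good_add[of F "\<lambda>a. (-1) * G a"] good_scale[of G "-1"] by simp

lemma good_series:
  assumes J: "\<And>n. finite (JJ n)" "\<And>n. depOn (JJ n) (c n)" and B: "\<And>n a. a \<in> Om \<Longrightarrow> \<bar>c n a\<bar> \<le> B"
  shows "good (\<lambda>a. \<Sum>n. \<beta> ^ n * c n a)"
proof -
  have B0: "0 \<le> B" if "a \<in> Om" for a using B[OF that, of 0] by linarith
  have summ: "summable (\<lambda>n. \<bar>\<beta> ^ n * c n a\<bar>)" if "a \<in> Om" for a
  proof (rule summable_comparison_test[where g="\<lambda>n. B * \<beta> ^ n"])
    show "\<exists>N. \<forall>n\<ge>N. norm \<bar>\<beta> ^ n * c n a\<bar> \<le> B * \<beta> ^ n"
      using B[OF that] beta by (auto simp: abs_mult mult.commute[of B] intro!: mult_left_mono)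
    show "summable (\<lambda>n. B * \<beta> ^ n)" using beta by (intro summable_mult summable_geometric) auto
  qed
  have tail: "\<bar>(\<Sum>n. \<beta> ^ n * c n a) - (\<Sum>n<N. \<beta> ^ n * c n a)\<bar> \<le> B * \<beta> ^ N / (1 - \<beta>)" if a: "a \<in> Om" for a N
  proof -
    have s: "summable (\<lambda>n. \<beta> ^ n * c n a)" using summ[OF a] by (rule summable_rabs_cancel)
    have "(\<Sum>n. \<beta> ^ n * c n a) - (\<Sum>n<N. \<beta> ^ n * c n a) = (\<Sum>n. \<beta> ^ (n + N) * c (n + N) a)"
      using suminf_minus_initial_segment[OF s, of N] by simp
    also have "\<bar>\<dots>\<bar> \<le> (\<Sum>n. \<bar>\<beta> ^ (n + N) * c (n + N) a\<bar>)"
      by (rule summable_rabs) (use summable_ignore_initial_segment[OF summ[OF a], of N] in simp)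
    also have "\<dots> \<le> (\<Sum>n. B * \<beta> ^ N * \<beta> ^ n)"
    proof (rule suminf_le)
      show "\<bar>\<beta> ^ (n + N) * c (n + N) a\<bar> \<le> B * \<beta> ^ N * \<beta> ^ n" for n
        using B[OF a, of "n + N"] beta by (auto simp: abs_mult power_add mult.commute mult.left_commute intro!: mult_left_mono)
      show "summable (\<lambda>n. \<bar>\<beta> ^ (n + N) * c (n + N) a\<bar>)"
        using summable_ignore_initial_segment[OF summ[OF a], of N] by simp
      show "summable (\<lambda>n. B * \<beta> ^ N * \<beta> ^ n)" using beta by (intro summable_mult summable_geometric) auto
    qed
    also have "\<dots> = B * \<beta> ^ N / (1 - \<beta>)"
      using beta by (simp add: suminf_mult suminf_geometric divide_simps)
    finally show ?thesis .
  qed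
  show ?thesis
    unfolding good_def
  proof (intro conjI allI impI)
    show "\<exists>B'. \<forall>a\<in>Om. \<bar>\<Sum>n. \<beta> ^ n * c n a\<bar> \<le> B'"
      using tail[of _ 0] by (intro exI[of _ "B / (1 - \<beta>)"]) simp
    fix e :: real assume e: "0 < e"
    have "(\<lambda>N. B * \<beta> ^ N / (1 - \<beta>)) \<longlonglongrightarrow> B * 0 / (1 - \<beta>)"
      using beta by (intro tendsto_divide tendsto_mult tendsto_const LIMSEQ_power_zero) auto
    from LIMSEQ_D[OF this e] obtain N where N: "norm (B * \<beta> ^ N / (1 - \<beta>) - B * 0 / (1 - \<beta>)) < e"
      by blast
    show "\<exists>J G. finite J \<and> depOn J G \<and> (\<forall>a\<in>Om. \<bar>(\<Sum>n. \<beta> ^ n * c n a) - G a\<bar> \<le> e)"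
    proof (intro exI[of _ "\<Union>n<N. JJ n"] exI[of _ "\<lambda>a. \<Sum>n<N. \<beta> ^ n * c n a"] conjI ballI)
      show "finite (\<Union>n<N. JJ n)" using J(1) by simp
      show "depOn (\<Union>n<N. JJ n) (\<lambda>a. \<Sum>n<N. \<beta> ^ n * c n a)"
        by (intro depOn_sum depOn_mult depOn_const depOn_mono[OF _ J(2)]) auto
      fix a assume "a \<in> Om"
      have "\<bar>B * \<beta> ^ N / (1 - \<beta>)\<bar> < e" using N by simp
      then have "B * \<beta> ^ N / (1 - \<beta>) < e" by linarith
      then show "\<bar>(\<Sum>n. \<beta> ^ n * c n a) - (\<Sum>n<N. \<beta> ^ n * c n a)\<bar> \<le> e"
        using tail[OF \<open>a \<in> Om\<close>, of N] by linarith
    qed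
  qed
qed

end


lemma cexp_scale: "cexp \<pi> h n (\<lambda>h'. c * F h') = c * cexp \<pi> h n F"
  by (induction n arbitrary: h) (simp_all add: sum_distrib_left algebra_simps)

context ctx
begin

definition JN :: "nat \<Rightarrow> 's list set" where "JN L = {h. length h \<le> L}"

lemma finite_JN: "finite (JN L)"
proof -
  have "JN L = {xs. set xs \<subseteq> UNIV \<and> length xs \<le> L}" by (simp add: JN_def)
  then show ?thesis using finite_lists_length_le[of "UNIV :: 's set" L] by simp
qed

definition bndf :: "('x \<Rightarrow> real^'n \<Rightarrow> 's \<Rightarrow> real) \<Rightarrow> real \<Rightarrow> bool" where
  "bndf f B \<longleftrightarrow> (\<forall>y\<in>X. \<forall>c\<in>A. \<forall>s. \<bar>f y c s\<bar> \<le> B)"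

lemma flow_bound:
  assumes "a \<in> Om" "bndf f B"
  shows "\<bar>flow \<zeta> a x0 f h\<bar> \<le> B"
proof -
  have "xp \<zeta> a x0 h \<in> X" by (rule xp_in[OF x0_X zeta_X Om_A[OF assms(1)]])
  then show ?thesis using assms Om_A[OF assms(1)] unfolding flow_def bndf_def by blast
qed

lemma cexp_dep: "depOn (JN (length h + n)) (\<lambda>a. cexp \<pi> h n (flow \<zeta> a x0 f))"
  unfolding depOn_iff
proof (intro ballI impI)
  fix a b assume ab: "a \<in> Om" "b \<in> Om" "\<forall>j\<in>JN (length h + n). a j = b j"
  show "cexp \<pi> h n (flow \<zeta> a x0 f) = cexp \<pi> h n (flow \<zeta> b x0 f)"
  proof (rule cexp_cong)
    fix h' :: "'s list" assume len: "length h' = length h + n"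
    show "flow \<zeta> a x0 f h' = flow \<zeta> b x0 f h'"
      by (rule flow_cong) (use ab(3) len in \<open>auto simp: JN_def\<close>)
  qed
qed

lemma disc_good:
  assumes "bndf f B"
  shows "good (\<lambda>a. disc \<beta> \<pi> h (flow \<zeta> a x0 f))"
  unfolding disc_def
proof (rule good_series)
  show "finite (JN (length h + n))" for n by (rule finite_JN)
  show "depOn (JN (length h + n)) (\<lambda>a. cexp \<pi> h n (flow \<zeta> a x0 f))" for n by (rule cexp_dep)
  show "\<bar>cexp \<pi> h n (flow \<zeta> a x0 f)\<bar> \<le> B" if "a \<in> Om" for n a
    by (rule cexp_bound[OF pi_nn pi_sum]) (rule flow_bound[OF that assms])
qed

lemma disc_summ:
  assumes "a \<in> Om" "bndf f B"
  shows "summable (\<lambda>n. \<beta> ^ n * cexp \<pi> h n (flow \<zeta> a x0 f))"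
  by (rule disc_summable[OF pi_nn pi_sum flow_bound[OF assms]]) (use beta in auto)

lemma disc_lin:
  fixes I :: "'i set"
  assumes "a \<in> Om" "bndf f B" "finite I" "\<And>i. i \<in> I \<Longrightarrow> bndf (g i) (Bg i)"
  shows "disc \<beta> \<pi> h (flow \<zeta> a x0 (\<lambda>y c s. f y c s + (\<Sum>i\<in>I. w i * g i y c s)))
       = disc \<beta> \<pi> h (flow \<zeta> a x0 f) + (\<Sum>i\<in>I. w i * disc \<beta> \<pi> h (flow \<zeta> a x0 (g i)))"
proof -
  have fl: "flow \<zeta> a x0 (\<lambda>y c s. f y c s + (\<Sum>i\<in>I. w i * g i y c s)) =
      (\<lambda>h'. 1 * flow \<zeta> a x0 f h' + (\<Sum>i\<in>I. w i * flow \<zeta> a x0 (g i) h'))"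
    by (simp add: flow_def fun_eq_iff)
  have ce: "cexp \<pi> h n (flow \<zeta> a x0 (\<lambda>y c s. f y c s + (\<Sum>i\<in>I. w i * g i y c s))) =
      cexp \<pi> h n (flow \<zeta> a x0 f) + (\<Sum>i\<in>I. w i * cexp \<pi> h n (flow \<zeta> a x0 (g i)))" for n
  proof -
    have "cexp \<pi> h n (\<lambda>h'. \<Sum>i\<in>I. w i * flow \<zeta> a x0 (g i) h') = (\<Sum>i\<in>I. cexp \<pi> h n (\<lambda>h'. w i * flow \<zeta> a x0 (g i) h'))"
      by (rule cexp_sum[OF assms(3)])
    also have "\<dots> = (\<Sum>i\<in>I. w i * cexp \<pi> h n (flow \<zeta> a x0 (g i)))"
      by (simp add: cexp_scale)
    finally show ?thesis unfolding fl cexp_lin by simp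
  qed
  have s0: "summable (\<lambda>n. \<beta> ^ n * cexp \<pi> h n (flow \<zeta> a x0 f))" by (rule disc_summ[OF assms(1,2)])
  have si: "summable (\<lambda>n. \<beta> ^ n * (w i * cexp \<pi> h n (flow \<zeta> a x0 (g i))))" if "i \<in> I" for i
    using summable_mult[OF disc_summ[OF assms(1) assms(4)[OF that]], of "w i"] by (simp add: algebra_simps)
  have "disc \<beta> \<pi> h (flow \<zeta> a x0 (\<lambda>y c s. f y c s + (\<Sum>i\<in>I. w i * g i y c s)))
     = (\<Sum>n. \<beta> ^ n * cexp \<pi> h n (flow \<zeta> a x0 f) + (\<Sum>i\<in>I. \<beta> ^ n * (w i * cexp \<pi> h n (flow \<zeta> a x0 (g i)))))"
    unfolding disc_def ce by (simp add: distrib_left sum_distrib_left)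
  also have "\<dots> = (\<Sum>n. \<beta> ^ n * cexp \<pi> h n (flow \<zeta> a x0 f)) + (\<Sum>n. \<Sum>i\<in>I. \<beta> ^ n * (w i * cexp \<pi> h n (flow \<zeta> a x0 (g i))))"
    by (rule suminf_add[symmetric]) (use s0 si in \<open>auto intro!: summable_sum\<close>)
  also have "(\<Sum>n. \<Sum>i\<in>I. \<beta> ^ n * (w i * cexp \<pi> h n (flow \<zeta> a x0 (g i)))) = (\<Sum>i\<in>I. \<Sum>n. \<beta> ^ n * (w i * cexp \<pi> h n (flow \<zeta> a x0 (g i))))"
    by (rule suminf_sum) (use si in auto)
  also have "\<dots> = (\<Sum>i\<in>I. w i * disc \<beta> \<pi> h (flow \<zeta> a x0 (g i)))"
  proof (rule sum.cong[OF refl])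
    fix i assume "i \<in> I"
    have "(\<Sum>n. \<beta> ^ n * (w i * cexp \<pi> h n (flow \<zeta> a x0 (g i)))) = (\<Sum>n. w i * (\<beta> ^ n * cexp \<pi> h n (flow \<zeta> a x0 (g i))))"
      by (simp add: algebra_simps)
    also have "\<dots> = w i * (\<Sum>n. \<beta> ^ n * cexp \<pi> h n (flow \<zeta> a x0 (g i)))"
      by (rule suminf_mult[OF disc_summ[OF assms(1) assms(4)[OF \<open>i \<in> I\<close>]]])
    finally show "(\<Sum>n. \<beta> ^ n * (w i * cexp \<pi> h n (flow \<zeta> a x0 (g i)))) = w i * disc \<beta> \<pi> h (flow \<zeta> a x0 (g i))"
      by (simp add: disc_def)
  qed
  finally show ?thesis by (simp add: disc_def)
qed

definition ind :: "'s list \<Rightarrow> (real^'n) list \<Rightarrow> ('s list \<Rightarrow> real^'n) \<Rightarrow> real" where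
  "ind h atil a = (if (\<forall>k < length h - 1. a (take (Suc k) h) = atil ! k) then 1 else 0)"

lemma ind_dep: "depOn (JN (length h)) (ind h atil)"
  unfolding depOn_iff
proof (intro ballI impI)
  fix a b assume ab: "a \<in> Om" "b \<in> Om" "\<forall>j\<in>JN (length h). a j = b j"
  have "a (take (Suc k) h) = b (take (Suc k) h)" for k
    using ab(3) by (auto simp: JN_def)
  then show "ind h atil a = ind h atil b" by (simp add: ind_def)
qed

lemma ind_bound: "\<bar>ind h atil a\<bar> \<le> 1"
  by (simp add: ind_def)

lemma constr_good:
  assumes "bndf f B"
  shows "good (\<lambda>a. ind h atil a * (disc \<beta> \<pi> h (flow \<zeta> a x0 f) - gb))"
  by (rule good_mult_dep[OF finite_JN ind_dep ind_bound]) (intro good_diff disc_good[OF assms] good_const)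

end


context ctx
begin

lemma cyl_disj: "disjoint_family_on (cyl H) S"
  unfolding disjoint_family_on_def cyl_def by auto

lemma measure_cyl_Union:
  assumes "P \<in> PS" "finite S"
  shows "measure P (\<Union>\<omega>\<in>S. cyl H \<omega>) = (\<Sum>\<omega>\<in>S. measure P (cyl H \<omega>))"
proof -
  interpret prob_space P using PS_prob[OF assms(1)] .
  show ?thesis
    by (rule finite_measure_finite_Union[OF assms(2)]) (use cyl_sets_P[OF assms(1)] cyl_disj in auto)
qed

lemma cyl_empty: "\<omega> \<notin> PiE J (\<lambda>_. A) \<Longrightarrow> cyl J \<omega> = {}"
  using restrict_in unfolding cyl_def by blast

lemma sum_cyl_one:
  assumes "P \<in> PS" "finite J"
  shows "(\<Sum>\<omega>\<in>PiE J (\<lambda>_. A). measure P (cyl J \<omega>)) = 1"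
proof -
  interpret prob_space P using PS_prob[OF assms(1)] .
  have "(\<Union>\<omega>\<in>PiE J (\<lambda>_. A). cyl J \<omega>) = Om"
    using restrict_in unfolding cyl_def by blast
  then have "(\<Sum>\<omega>\<in>PiE J (\<lambda>_. A). measure P (cyl J \<omega>)) = measure P Om"
    using measure_cyl_Union[OF assms(1), of "PiE J (\<lambda>_. A)" J] assms(2) A_fin by (simp add: finite_PiE)
  also have "\<dots> = 1" using PS_space[OF assms(1)] prob_space by simp
  finally show ?thesis .
qed

lemma cyl_refine:
  assumes "J \<subseteq> H"
  shows "cyl J \<omega> = (\<Union>\<omega>'\<in>{\<omega>'\<in>PiE H (\<lambda>_. A). restrict \<omega>' J = \<omega>}. cyl H \<omega>')"
proof (intro equalityI subsetI)
  fix a assume a: "a \<in> cyl J \<omega>"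
  then have aO: "a \<in> Om" and "restrict a J = \<omega>" by (auto simp: cyl_def)
  moreover have "restrict (restrict a H) J = restrict a J"
    using assms by (simp add: restrict_restrict Int_absorb1)
  ultimately show "a \<in> (\<Union>\<omega>'\<in>{\<omega>'\<in>PiE H (\<lambda>_. A). restrict \<omega>' J = \<omega>}. cyl H \<omega>')"
    using restrict_in[OF aO, of H] by (auto simp: cyl_def)
next
  fix a assume "a \<in> (\<Union>\<omega>'\<in>{\<omega>'\<in>PiE H (\<lambda>_. A). restrict \<omega>' J = \<omega>}. cyl H \<omega>')"
  then obtain \<omega>' where "a \<in> Om" "restrict a H = \<omega>'" "restrict \<omega>' J = \<omega>" by (auto simp: cyl_def)
  moreover have "restrict (restrict a H) J = restrict a J"
    using assms by (simp add: restrict_restrict Int_absorb1)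
  ultimately show "a \<in> cyl J \<omega>" by (simp add: cyl_def)
qed

lemma measure_cyl_refine:
  assumes "P \<in> PS" "finite H" "J \<subseteq> H"
  shows "measure P (cyl J \<omega>) = (\<Sum>\<omega>'\<in>{\<omega>'\<in>PiE H (\<lambda>_. A). restrict \<omega>' J = \<omega>}. measure P (cyl H \<omega>'))"
  unfolding cyl_refine[OF assms(3), of \<omega>]
  by (rule measure_cyl_Union[OF assms(1)]) (use assms(2) A_fin in \<open>simp add: finite_PiE\<close>)

definition TT :: "('s list set \<times> ('s list \<Rightarrow> real^'n)) set" where
  "TT = (SIGMA J:{J. finite J}. PiE J (\<lambda>_. A))"

lemma countable_TT: "countable TT"
  unfolding TT_def
proof (rule countable_SIGMA)
  show "countable {J :: 's list set. finite J}" by (rule countable_Collect_finite)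
  fix J :: "'s list set" assume "J \<in> {J. finite J}"
  then have "finite (PiE J (\<lambda>_. A))" using A_fin by (simp add: finite_PiE)
  then show "countable (PiE J (\<lambda>_. A))" by (rule countable_finite)
qed

lemma TT_ne: "TT \<noteq> {}"
proof -
  have "({}, (\<lambda>_. undefined)) \<in> TT" unfolding TT_def by simp
  then show ?thesis by blast
qed

lemma diag_extract:
  fixes w :: "nat \<Rightarrow> ('s list set \<times> ('s list \<Rightarrow> real^'n)) \<Rightarrow> real"
  assumes bnd: "\<And>k t. \<bar>w k t\<bar> \<le> 1"
  shows "\<exists>r. strict_mono r \<and> (\<forall>t\<in>TT. convergent (\<lambda>k. w (r k) t))"
proof -
  define e where "e = from_nat_into TT"
  interpret subseqs "\<lambda>n s. convergent (\<lambda>k. w (s k) (e n))"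
  proof
    fix n and s :: "nat \<Rightarrow> nat"
    assume "strict_mono s"
    have "bounded (range (\<lambda>k. w (s k) (e n)))"
      unfolding bounded_real by (intro exI[of _ 1]) (simp add: bnd)
    from bounded_imp_convergent_subsequence[OF this] obtain l r where "strict_mono r" "((\<lambda>k. w (s k) (e n)) \<circ> r) \<longlonglongrightarrow> l"
      by blast
    then show "\<exists>r'. strict_mono r' \<and> convergent (\<lambda>k. w ((s \<circ> r') k) (e n))"
      by (intro exI[of _ r]) (auto simp: convergent_def o_def)
  qed
  have conv: "convergent (\<lambda>k. w (diagseq k) (e n))" for n
  proof -
    have "convergent (\<lambda>k. w ((diagseq \<circ> (+) (Suc n)) k) (e n))"
    proof (rule diagseq_holds)
      fix r s n
      assume "strict_mono (r :: nat \<Rightarrow> nat)" "convergent (\<lambda>k. w (s k) (e n))"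
      then show "convergent (\<lambda>k. w ((s \<circ> r) k) (e n))"
        using convergent_subseq_convergent[of "\<lambda>k. w (s k) (e n)" r] by (simp add: o_def)
    qed
    then obtain l where "(\<lambda>k. w (diagseq (k + Suc n)) (e n)) \<longlonglongrightarrow> l"
      by (auto simp: convergent_def o_def add.commute)
    then have "(\<lambda>k. w (diagseq k) (e n)) \<longlonglongrightarrow> l" by (rule LIMSEQ_offset)
    then show ?thesis by (auto simp: convergent_def)
  qed
  have "\<forall>t\<in>TT. convergent (\<lambda>k. w (diagseq k) t)"
  proof
    fix t assume "t \<in> TT"
    then have "e (to_nat_on TT t) = t"
      unfolding e_def by (rule from_nat_into_to_nat_on[OF countable_TT])
    then show "convergent (\<lambda>k. w (diagseq k) t)" using conv[of "to_nat_on TT t"] by simp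
  qed
  then show ?thesis using subseq_diagseq by blast
qed

end


lemma finite_sets_PiM:
  assumes "finite J" "finite S" "S \<subseteq> PiE J (\<lambda>_. UNIV)"
  shows "S \<in> sets (PiM J (\<lambda>_. borel :: ('b::t1_space) measure))"
proof -
  have "S = (\<Union>\<omega>\<in>S. PiE J (\<lambda>j. {\<omega> j}))"
  proof -
    have "PiE J (\<lambda>j. {\<omega> j}) = {\<omega>}" if "\<omega> \<in> S" for \<omega>
      using assms(3) that by (intro PiE_singleton) (auto simp: PiE_def)
    then show ?thesis by auto
  qed
  also have "\<dots> \<in> sets (PiM J (\<lambda>_. borel))"
    by (intro sets.finite_UN assms(2) sets_PiM_I_finite assms(1) borel_closed closed_singleton)
  finally show ?thesis .
qed

locale wfam = ctx \<beta> \<pi> \<zeta> p A X x0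
  for \<beta> :: real and \<pi> :: "'s::finite \<Rightarrow> 's \<Rightarrow> real" and \<zeta> :: "'x \<Rightarrow> real^'n \<Rightarrow> 's \<Rightarrow> 'x"
    and p :: "'x \<Rightarrow> real^'n \<Rightarrow> 's \<Rightarrow> real" and A :: "(real^'n) set" and X :: "'x set" and x0 :: 'x +
  fixes W :: "('s list set \<times> ('s list \<Rightarrow> real^'n)) \<Rightarrow> real"
  assumes W0: "\<And>J \<omega>. finite J \<Longrightarrow> \<omega> \<in> PiE J (\<lambda>_. A) \<Longrightarrow> W (J, \<omega>) \<ge> 0"
    and W1: "\<And>J. finite J \<Longrightarrow> (\<Sum>\<omega>\<in>PiE J (\<lambda>_. A). W (J, \<omega>)) = 1"
    and W2: "\<And>J H \<omega>. finite H \<Longrightarrow> J \<subseteq> H \<Longrightarrow> \<omega> \<in> PiE J (\<lambda>_. A) \<Longrightarrow>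
               W (J, \<omega>) = (\<Sum>\<omega>'\<in>{\<omega>'\<in>PiE H (\<lambda>_. A). restrict \<omega>' J = \<omega>}. W (H, \<omega>'))"
    and W3: "\<And>J \<omega>. finite J \<Longrightarrow> \<omega> \<in> PiE J (\<lambda>_. A) \<Longrightarrow> cyl J \<omega> = {} \<Longrightarrow> W (J, \<omega>) = 0"
begin

definition wf :: "'s list set \<Rightarrow> ('s list \<Rightarrow> real^'n) \<Rightarrow> real" where
  "wf J \<omega> = (if \<omega> \<in> PiE J (\<lambda>_. A) then W (J, \<omega>) else 0)"

definition pJ :: "'s list set \<Rightarrow> ('s list \<Rightarrow> real^'n) pmf" where
  "pJ J = embed_pmf (wf J)"

lemma wf_nn: "finite J \<Longrightarrow> wf J \<omega> \<ge> 0"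
  by (simp add: wf_def W0)

lemma pmf_pJ:
  assumes "finite J"
  shows "pmf (pJ J) \<omega> = wf J \<omega>"
proof -
  have fin: "finite (PiE J (\<lambda>_. A))" using assms A_fin by (simp add: finite_PiE)
  have "(\<integral>\<^sup>+ x. ennreal (wf J x) \<partial>count_space UNIV) = (\<Sum>x\<in>PiE J (\<lambda>_. A). ennreal (wf J x))"
    by (rule nn_integral_count_space'[OF fin]) (auto simp: wf_def)
  also have "\<dots> = ennreal (\<Sum>x\<in>PiE J (\<lambda>_. A). wf J x)"
    by (rule sum_ennreal) (rule wf_nn[OF assms])
  also have "(\<Sum>x\<in>PiE J (\<lambda>_. A). wf J x) = 1"
    using W1[OF assms] by (simp add: wf_def)
  finally show ?thesis
    unfolding pJ_def by (intro pmf_embed_pmf wf_nn assms) simp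
qed

lemma set_pJ: "finite J \<Longrightarrow> set_pmf (pJ J) \<subseteq> PiE J (\<lambda>_. A)"
  by (auto simp: set_pmf_iff pmf_pJ wf_def split: if_splits)

lemma em_pJ:
  assumes "finite J"
  shows "emeasure (measure_pmf (pJ J)) {f. restrict f J \<in> Y} = ennreal (\<Sum>\<omega>\<in>PiE J (\<lambda>_. A) \<inter> Y. W (J, \<omega>))"
proof -
  have fin: "finite (PiE J (\<lambda>_. A) \<inter> Y)" using assms A_fin by (simp add: finite_PiE)
  have eq: "{f. restrict f J \<in> Y} \<inter> set_pmf (pJ J) = (PiE J (\<lambda>_. A) \<inter> Y) \<inter> set_pmf (pJ J)"
  proof (intro equalityI subsetI)
    fix f assume f: "f \<in> {f. restrict f J \<in> Y} \<inter> set_pmf (pJ J)"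
    then have "f \<in> PiE J (\<lambda>_. A)" using set_pJ[OF assms] by blast
    then show "f \<in> (PiE J (\<lambda>_. A) \<inter> Y) \<inter> set_pmf (pJ J)" using f by (simp add: PiE_restrict)
  next
    fix f assume f: "f \<in> (PiE J (\<lambda>_. A) \<inter> Y) \<inter> set_pmf (pJ J)"
    then have "restrict f J = f" using PiE_restrict[of f J "\<lambda>_. A"] by blast
    then show "f \<in> {f. restrict f J \<in> Y} \<inter> set_pmf (pJ J)" using f by simp
  qed
  have "emeasure (measure_pmf (pJ J)) {f. restrict f J \<in> Y} = emeasure (measure_pmf (pJ J)) ((PiE J (\<lambda>_. A) \<inter> Y) \<inter> set_pmf (pJ J))"
    using emeasure_Int_set_pmf[of "pJ J" "{f. restrict f J \<in> Y}"] eq by simp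
  also have "\<dots> = emeasure (measure_pmf (pJ J)) (PiE J (\<lambda>_. A) \<inter> Y)"
    by (rule emeasure_Int_set_pmf)
  also have "\<dots> = ennreal (\<Sum>\<omega>\<in>PiE J (\<lambda>_. A) \<inter> Y. pmf (pJ J) \<omega>)"
    by (rule emeasure_measure_pmf_finite[OF fin])
  also have "(\<Sum>\<omega>\<in>PiE J (\<lambda>_. A) \<inter> Y. pmf (pJ J) \<omega>) = (\<Sum>\<omega>\<in>PiE J (\<lambda>_. A) \<inter> Y. W (J, \<omega>))"
    by (rule sum.cong) (auto simp: pmf_pJ[OF assms] wf_def)
  finally show ?thesis .
qed

definition PJ :: "'s list set \<Rightarrow> ('s list \<Rightarrow> real^'n) measure" where
  "PJ J = distr (measure_pmf (pJ J)) (PiM J (\<lambda>_. borel)) (\<lambda>f. restrict f J)"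

lemma meas_restr: "(\<lambda>f. restrict f J) \<in> measurable (measure_pmf M) (PiM J (\<lambda>_. borel :: (real^'n) measure))"
  by (simp add: measurable_pmf_measure1 space_PiM)

lemma sets_PJ: "sets (PJ J) = sets (PiM J (\<lambda>_. borel))"
  by (simp add: PJ_def)

lemma space_PJ: "space (PJ J) = space (PiM J (\<lambda>_. borel))"
  by (simp add: PJ_def)

lemma em_PJ:
  assumes "finite J" "Y \<in> sets (PiM J (\<lambda>_. borel))"
  shows "emeasure (PJ J) Y = ennreal (\<Sum>\<omega>\<in>PiE J (\<lambda>_. A) \<inter> Y. W (J, \<omega>))"
proof -
  have "emeasure (PJ J) Y = emeasure (measure_pmf (pJ J)) ((\<lambda>f. restrict f J) -` Y \<inter> space (measure_pmf (pJ J)))"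
    unfolding PJ_def by (rule emeasure_distr[OF meas_restr assms(2)])
  also have "(\<lambda>f. restrict f J) -` Y \<inter> space (measure_pmf (pJ J)) = {f. restrict f J \<in> Y}" by auto
  finally show ?thesis using em_pJ[OF assms(1)] by simp
qed

lemma prob_PJ: "prob_space (PJ J)"
  unfolding PJ_def by (rule prob_space.prob_space_distr[OF prob_space_measure_pmf meas_restr])

lemma restrict_PiE_sub: "\<omega>' \<in> PiE H (\<lambda>_. A) \<Longrightarrow> J \<subseteq> H \<Longrightarrow> restrict \<omega>' J \<in> PiE J (\<lambda>_. A)"
  by (auto simp: PiE_def Pi_def)

lemma PJ_consistent:
  assumes "J \<subseteq> H" "finite H"
  shows "PJ J = distr (PJ H) (PiM J (\<lambda>_. borel)) (\<lambda>f. restrict f J)"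
proof (rule measure_eqI)
  have fJ: "finite J" using assms finite_subset by blast
  have mr: "(\<lambda>f. restrict f J) \<in> measurable (PJ H) (PiM J (\<lambda>_. borel))"
    using measurable_restrict_subset[OF assms(1), of "\<lambda>_. borel :: (real^'n) measure"]
    by (simp add: measurable_cong_sets[OF sets_PJ refl])
  show "sets (PJ J) = sets (distr (PJ H) (PiM J (\<lambda>_. borel)) (\<lambda>f. restrict f J))"
    by (simp add: sets_PJ)
  fix Y assume "Y \<in> sets (PJ J)"
  then have Y: "Y \<in> sets (PiM J (\<lambda>_. borel))" by (simp add: sets_PJ)
  define Z where "Z = (\<lambda>f. restrict f J) -` Y \<inter> space (PJ H)"
  have Z: "Z \<in> sets (PiM H (\<lambda>_. borel))"
    unfolding Z_def using measurable_sets[OF mr Y] by (simp add: sets_PJ)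
  have "emeasure (distr (PJ H) (PiM J (\<lambda>_. borel)) (\<lambda>f. restrict f J)) Y = emeasure (PJ H) Z"
    unfolding Z_def by (rule emeasure_distr[OF mr Y])
  also have "\<dots> = ennreal (\<Sum>\<omega>'\<in>PiE H (\<lambda>_. A) \<inter> Z. W (H, \<omega>'))"
    by (rule em_PJ[OF assms(2) Z])
  also have "PiE H (\<lambda>_. A) \<inter> Z = {\<omega>'\<in>PiE H (\<lambda>_. A). restrict \<omega>' J \<in> Y}"
    unfolding Z_def space_PJ space_PiM by (auto simp: PiE_def Pi_def)
  also have "(\<Sum>\<omega>'\<in>{\<omega>'\<in>PiE H (\<lambda>_. A). restrict \<omega>' J \<in> Y}. W (H, \<omega>'))
      = (\<Sum>\<omega>\<in>PiE J (\<lambda>_. A) \<inter> Y. \<Sum>\<omega>'\<in>{x\<in>{\<omega>'\<in>PiE H (\<lambda>_. A). restrict \<omega>' J \<in> Y}. restrict x J = \<omega>}. W (H, \<omega>'))"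
    by (rule sum.group[symmetric]) (use assms A_fin fJ restrict_PiE_sub in \<open>auto simp: finite_PiE\<close>)
  also have "\<dots> = (\<Sum>\<omega>\<in>PiE J (\<lambda>_. A) \<inter> Y. W (J, \<omega>))"
  proof (rule sum.cong[OF refl])
    fix \<omega> assume \<omega>: "\<omega> \<in> PiE J (\<lambda>_. A) \<inter> Y"
    have "{x\<in>{\<omega>'\<in>PiE H (\<lambda>_. A). restrict \<omega>' J \<in> Y}. restrict x J = \<omega>} = {\<omega>'\<in>PiE H (\<lambda>_. A). restrict \<omega>' J = \<omega>}"
      using \<omega> by auto
    then show "(\<Sum>\<omega>'\<in>{x\<in>{\<omega>'\<in>PiE H (\<lambda>_. A). restrict \<omega>' J \<in> Y}. restrict x J = \<omega>}. W (H, \<omega>')) = W (J, \<omega>)"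
      using W2[OF assms(2,1), of \<omega>] \<omega> by simp
  qed
  also have "ennreal \<dots> = emeasure (PJ J) Y"
    by (rule em_PJ[OF fJ Y, symmetric])
  finally show "emeasure (PJ J) Y = emeasure (distr (PJ H) (PiM J (\<lambda>_. borel)) (\<lambda>f. restrict f J)) Y" ..
qed

lemma pp: "polish_projective UNIV PJ"
  unfolding polish_projective_def
proof (rule projective_family.intro)
  fix J H :: "'s list set" assume "J \<subseteq> H" "finite H" "H \<subseteq> UNIV"
  then show "PJ J = distr (PJ H) (PiM J (\<lambda>_. borel)) (\<lambda>f. restrict f J)"
    using PJ_consistent by blast
next
  fix J :: "'s list set" assume "finite J" "J \<subseteq> UNIV"
  show "prob_space (PJ J)" by (rule prob_PJ)
qed

end


context wfam
begin

interpretation PP: polish_projective UNIV PJ by (rule pp)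

lemma sets_L: "sets PP.lim = sets (borel :: ('s list \<Rightarrow> real^'n) measure)"
  using PP.sets_lim sets_borel_fun by simp

lemma space_L: "space PP.lim = UNIV"
proof -
  have "space PP.lim = space (borel :: ('s list \<Rightarrow> real^'n) measure)"
    by (rule sets_eq_imp_space_eq[OF sets_L])
  then show ?thesis by simp
qed

lemma emb_eq: "prod_emb UNIV (\<lambda>_. borel :: (real^'n) measure) J Y = {f. restrict f J \<in> Y}"
  by (auto simp: prod_emb_def)

lemma em_L:
  assumes "finite J" "Y \<in> sets (PiM J (\<lambda>_. borel))"
  shows "emeasure PP.lim {f. restrict f J \<in> Y} = ennreal (\<Sum>\<omega>\<in>PiE J (\<lambda>_. A) \<inter> Y. W (J, \<omega>))"
  using PP.emeasure_lim_emb[of J Y] assms em_PJ[OF assms] by (simp add: emb_eq)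

definition SN :: "nat \<Rightarrow> ('s list \<Rightarrow> real^'n) set" where
  "SN N = {\<omega> \<in> PiE (JN N) (\<lambda>_. A). \<forall>h\<in>JN N. h \<noteq> [] \<longrightarrow> p (xp \<zeta> \<omega> x0 h) (\<omega> h) (last h) \<ge> 0}"

lemma xp_restrict: "h \<in> JN N \<Longrightarrow> xp \<zeta> (restrict a (JN N)) x0 h = xp \<zeta> a x0 h"
  by (rule xp_cong) (auto simp: JN_def)

lemma Om_char: "a \<in> Om \<longleftrightarrow> (\<forall>N. restrict a (JN N) \<in> SN N)"
proof
  assume a: "a \<in> Om"
  show "\<forall>N. restrict a (JN N) \<in> SN N"
  proof
    fix N
    have "restrict a (JN N) \<in> PiE (JN N) (\<lambda>_. A)" by (rule restrict_in[OF a])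
    moreover have "p (xp \<zeta> (restrict a (JN N)) x0 h) (restrict a (JN N) h) (last h) \<ge> 0" if "h \<in> JN N" "h \<noteq> []" for h
      using a that xp_restrict[OF that(1), of a] by (simp add: plans_def)
    ultimately show "restrict a (JN N) \<in> SN N" by (simp add: SN_def)
  qed
next
  assume H: "\<forall>N. restrict a (JN N) \<in> SN N"
  have "a h \<in> A" for h
  proof -
    have "h \<in> JN (length h)" by (simp add: JN_def)
    then show ?thesis using H[rule_format, of "length h"] by (auto simp: SN_def PiE_def Pi_def)
  qed
  moreover have "p (xp \<zeta> a x0 h) (a h) (last h) \<ge> 0" if "h \<noteq> []" for h
  proof -
    have h: "h \<in> JN (length h)" by (simp add: JN_def)
    have "restrict a (JN (length h)) \<in> SN (length h)" using H by blast
    then have "\<forall>ha\<in>JN (length h). ha \<noteq> [] \<longrightarrow> 0 \<le> p (xp \<zeta> (restrict a (JN (length h))) x0 ha) (restrict a (JN (length h)) ha) (last ha)"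
      unfolding SN_def by blast
    then have "0 \<le> p (xp \<zeta> (restrict a (JN (length h))) x0 h) (restrict a (JN (length h)) h) (last h)"
      using h that by blast
    then show ?thesis using xp_restrict[OF h, of a] h by simp
  qed
  ultimately show "a \<in> Om" by (simp add: plans_def)
qed

lemma SN_sets: "SN N \<in> sets (PiM (JN N) (\<lambda>_. borel))"
proof (rule finite_sets_PiM[OF finite_JN])
  show "finite (SN N)"
    by (rule finite_subset[of _ "PiE (JN N) (\<lambda>_. A)"]) (use finite_JN A_fin in \<open>auto simp: SN_def finite_PiE\<close>)
  show "SN N \<subseteq> PiE (JN N) (\<lambda>_. UNIV)" by (auto simp: SN_def PiE_def Pi_def)
qed

lemma em_SN: "emeasure PP.lim {f. restrict f (JN N) \<in> SN N} = 1"
proof -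
  have "(\<Sum>\<omega>\<in>PiE (JN N) (\<lambda>_. A) \<inter> SN N. W (JN N, \<omega>)) = (\<Sum>\<omega>\<in>PiE (JN N) (\<lambda>_. A). W (JN N, \<omega>))"
  proof (rule sum.mono_neutral_left)
    show "finite (PiE (JN N) (\<lambda>_. A))" using finite_JN A_fin by (simp add: finite_PiE)
    show "PiE (JN N) (\<lambda>_. A) \<inter> SN N \<subseteq> PiE (JN N) (\<lambda>_. A)" by blast
    show "\<forall>i\<in>PiE (JN N) (\<lambda>_. A) - PiE (JN N) (\<lambda>_. A) \<inter> SN N. W (JN N, i) = 0"
    proof
      fix \<omega> assume \<omega>: "\<omega> \<in> PiE (JN N) (\<lambda>_. A) - PiE (JN N) (\<lambda>_. A) \<inter> SN N"
      have "cyl (JN N) \<omega> = {}"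
        using \<omega> Om_char unfolding cyl_def by blast
      then show "W (JN N, \<omega>) = 0" using W3[OF finite_JN] \<omega> by blast
    qed
  qed
  then show ?thesis using em_L[OF finite_JN SN_sets] W1[OF finite_JN] by simp
qed

lemma prob_L: "prob_space PP.lim"
  by (rule PP.P.prob_space_axioms)

lemma null_N: "UNIV - {f. restrict f (JN N) \<in> SN N} \<in> null_sets PP.lim"
proof -
  have s: "{f. restrict f (JN N) \<in> SN N} \<in> sets PP.lim"
  proof -
    have "prod_emb UNIV (\<lambda>_. borel) (JN N) (SN N) \<in> sets (PiM UNIV (\<lambda>_. borel :: (real^'n) measure))"
      by (rule measurable_prod_emb[OF _ SN_sets]) simp
    then show ?thesis using PP.sets_lim by (simp only: emb_eq)
  qed
  have "emeasure PP.lim (space PP.lim - {f. restrict f (JN N) \<in> SN N}) = emeasure PP.lim (space PP.lim) - emeasure PP.lim {f. restrict f (JN N) \<in> SN N}"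
    by (rule emeasure_compl[OF s]) simp
  also have "\<dots> = 0" using em_SN prob_space.emeasure_space_1[OF prob_L] by simp
  moreover have "space PP.lim - {f. restrict f (JN N) \<in> SN N} \<in> sets PP.lim"
    using s by (rule sets.compl_sets)
  ultimately show ?thesis using space_L by (simp add: null_sets_def)
qed


lemma Om_compl_null: "UNIV - Om \<in> null_sets PP.lim"
proof -
  have "UNIV - Om = (\<Union>N. UNIV - {f. restrict f (JN N) \<in> SN N})"
    using Om_char by blast
  also have "\<dots> \<in> null_sets PP.lim"
    by (rule null_sets_UN) (rule null_N)
  finally show ?thesis .
qed

lemma Om_sets_L: "Om \<in> sets PP.lim"
proof -
  have "space PP.lim - (UNIV - Om) \<in> sets PP.lim"
    using Om_compl_null by (intro sets.compl_sets) auto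
  then show ?thesis using space_L by (simp add: Diff_Diff_Int)
qed

lemma Om_em_L: "emeasure PP.lim Om = 1"
proof -
  have "emeasure PP.lim (space PP.lim - (UNIV - Om)) = emeasure PP.lim (space PP.lim)"
    by (rule emeasure_Diff_null_set[OF Om_compl_null]) simp
  then show ?thesis using space_L prob_space.emeasure_space_1[OF prob_L] by (simp add: Diff_Diff_Int)
qed

definition Qlim where "Qlim = restrict_space PP.lim Om"

lemma Qlim_PS: "Qlim \<in> PS"
  unfolding PS_def Qlim_def
proof (intro CollectI conjI)
  show "prob_space (restrict_space PP.lim Om)"
    by (rule prob_space_restrict_space[OF Om_sets_L Om_em_L])
  show "sets (restrict_space PP.lim Om) = sets M0"
    by (rule sets_restrict_space_cong[OF sets_L])
qed

lemma Qlim_cyl: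
  assumes "finite J" "\<omega> \<in> PiE J (\<lambda>_. A)"
  shows "measure Qlim (cyl J \<omega>) = W (J, \<omega>)"
proof -
  have cs: "{f. restrict f J \<in> {\<omega>}} \<in> sets PP.lim" using cylset_borel[of J \<omega>] sets_L by simp
  have e1: "cyl J \<omega> = {f. restrict f J \<in> {\<omega>}} - (UNIV - Om)" by (auto simp: cyl_def)
  have "measure Qlim (cyl J \<omega>) = measure PP.lim (cyl J \<omega>)"
    unfolding Qlim_def by (rule measure_restrict_space) (use Om_sets_L space_L in \<open>auto simp: cyl_def\<close>)
  also have "\<dots> = measure PP.lim {f. restrict f J \<in> {\<omega>}}"
    unfolding e1 by (rule measure_Diff_null_set[OF cs Om_compl_null])
  also have "\<dots> = enn2real (ennreal (\<Sum>\<omega>'\<in>PiE J (\<lambda>_. A) \<inter> {\<omega>}. W (J, \<omega>')))"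
  proof -
    have "{\<omega>} \<in> sets (PiM J (\<lambda>_. borel :: (real^'n) measure))"
      by (rule finite_sets_PiM[OF assms(1)]) (use assms(2) in \<open>auto simp: PiE_def Pi_def\<close>)
    from em_L[OF assms(1) this] have "emeasure PP.lim {f. restrict f J \<in> {\<omega>}} = ennreal (\<Sum>\<omega>'\<in>PiE J (\<lambda>_. A) \<inter> {\<omega>}. W (J, \<omega>'))" .
    then show ?thesis unfolding measure_def by (simp only:)
  qed
  also have "\<dots> = W (J, \<omega>)"
  proof -
    have "PiE J (\<lambda>_. A) \<inter> {\<omega>} = {\<omega>}" using assms(2) by blast
    then show ?thesis using W0[OF assms] by simp
  qed
  finally show ?thesis .
qed

lemma exists_limit: "\<exists>Q\<in>PS. \<forall>J \<omega>. finite J \<longrightarrow> \<omega> \<in> PiE J (\<lambda>_. A) \<longrightarrow> measure Q (cyl J \<omega>) = W (J, \<omega>)"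
  using Qlim_PS Qlim_cyl by blast

end


context ctx
begin

lemma measure_PS_bound: "P \<in> PS \<Longrightarrow> \<bar>measure P S\<bar> \<le> 1"
  using prob_space.prob_le_1[OF PS_prob] by simp

lemma compact_PS:
  fixes Qk :: "nat \<Rightarrow> ('s list \<Rightarrow> real^'n) measure"
  assumes Qk: "\<And>k. Qk k \<in> PS"
  shows "\<exists>r Q. strict_mono r \<and> Q \<in> PS \<and> convm (Qk \<circ> r) Q"
proof -
  define w where "w k t = measure (Qk k) (cyl (fst t) (snd t))" for k t
  have wb: "\<And>k t. \<bar>w k t\<bar> \<le> 1" unfolding w_def by (rule measure_PS_bound[OF Qk])
  from diag_extract[of w, OF wb] obtain r where r: "strict_mono r" "\<forall>t\<in>TT. convergent (\<lambda>k. w (r k) t)"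
    by blast
  define W where "W t = lim (\<lambda>k. w (r k) t)" for t
  have lim: "(\<lambda>k. measure (Qk (r k)) (cyl J \<omega>)) \<longlonglongrightarrow> W (J, \<omega>)" if "finite J" "\<omega> \<in> PiE J (\<lambda>_. A)" for J \<omega>
  proof -
    have "(J, \<omega>) \<in> TT" using that by (simp add: TT_def)
    then have "(\<lambda>k. w (r k) (J, \<omega>)) \<longlonglongrightarrow> W (J, \<omega>)"
      using r(2) unfolding W_def by (simp add: convergent_LIMSEQ_iff)
    then show ?thesis by (simp add: w_def)
  qed
  have "wfam \<beta> \<pi> \<zeta> p A X x0 W"
  proof (unfold_locales)
    fix J :: "'s list set" and \<omega> assume J: "finite J" and \<omega>: "\<omega> \<in> PiE J (\<lambda>_. A)"
    show "0 \<le> W (J, \<omega>)"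
      by (rule LIMSEQ_le_const[OF lim[OF J \<omega>]]) (intro exI[of _ 0] allI impI measure_nonneg)
  next
    fix J :: "'s list set" assume J: "finite J"
    have fin: "finite (PiE J (\<lambda>_. A))" using J A_fin by (simp add: finite_PiE)
    have "(\<lambda>k. \<Sum>\<omega>\<in>PiE J (\<lambda>_. A). measure (Qk (r k)) (cyl J \<omega>)) \<longlonglongrightarrow> (\<Sum>\<omega>\<in>PiE J (\<lambda>_. A). W (J, \<omega>))"
      by (intro tendsto_sum lim J)
    moreover have "(\<lambda>k. \<Sum>\<omega>\<in>PiE J (\<lambda>_. A). measure (Qk (r k)) (cyl J \<omega>)) = (\<lambda>k. 1)"
      using sum_cyl_one[OF Qk J] by simp
    ultimately have "(\<lambda>k. 1::real) \<longlonglongrightarrow> (\<Sum>\<omega>\<in>PiE J (\<lambda>_. A). W (J, \<omega>))" by simp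
    from LIMSEQ_unique[OF tendsto_const this] show "(\<Sum>\<omega>\<in>PiE J (\<lambda>_. A). W (J, \<omega>)) = 1" by simp
  next
    fix J H :: "'s list set" and \<omega> assume H: "finite H" and JH: "J \<subseteq> H" and \<omega>: "\<omega> \<in> PiE J (\<lambda>_. A)"
    have J: "finite J" using H JH finite_subset by blast
    have "(\<lambda>k. \<Sum>\<omega>'\<in>{\<omega>'\<in>PiE H (\<lambda>_. A). restrict \<omega>' J = \<omega>}. measure (Qk (r k)) (cyl H \<omega>'))
        \<longlonglongrightarrow> (\<Sum>\<omega>'\<in>{\<omega>'\<in>PiE H (\<lambda>_. A). restrict \<omega>' J = \<omega>}. W (H, \<omega>'))"
      by (intro tendsto_sum lim H) simp
    moreover have "(\<lambda>k. \<Sum>\<omega>'\<in>{\<omega>'\<in>PiE H (\<lambda>_. A). restrict \<omega>' J = \<omega>}. measure (Qk (r k)) (cyl H \<omega>'))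
        = (\<lambda>k. measure (Qk (r k)) (cyl J \<omega>))"
      using measure_cyl_refine[OF Qk H JH] by simp
    ultimately have "(\<lambda>k. measure (Qk (r k)) (cyl J \<omega>)) \<longlonglongrightarrow> (\<Sum>\<omega>'\<in>{\<omega>'\<in>PiE H (\<lambda>_. A). restrict \<omega>' J = \<omega>}. W (H, \<omega>'))"
      by simp
    from LIMSEQ_unique[OF lim[OF J \<omega>] this]
    show "W (J, \<omega>) = (\<Sum>\<omega>'\<in>{\<omega>'\<in>PiE H (\<lambda>_. A). restrict \<omega>' J = \<omega>}. W (H, \<omega>'))" .
  next
    fix J :: "'s list set" and \<omega> assume J: "finite J" and \<omega>: "\<omega> \<in> PiE J (\<lambda>_. A)" and e: "cyl J \<omega> = {}"
    have "(\<lambda>k. measure (Qk (r k)) (cyl J \<omega>)) = (\<lambda>k. 0)" using e by simp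
    then have "(\<lambda>k. 0::real) \<longlonglongrightarrow> W (J, \<omega>)" using lim[OF J \<omega>] by simp
    from LIMSEQ_unique[OF this tendsto_const] show "W (J, \<omega>) = 0" .
  qed
  then have ex: "\<exists>Q\<in>PS. \<forall>J \<omega>. finite J \<longrightarrow> \<omega> \<in> PiE J (\<lambda>_. A) \<longrightarrow> measure Q (cyl J \<omega>) = W (J, \<omega>)"
    by (rule wfam.exists_limit)
  then obtain Q where Q1: "Q \<in> PS" and Q2: "\<forall>J \<omega>. finite J \<longrightarrow> \<omega> \<in> PiE J (\<lambda>_. A) \<longrightarrow> measure Q (cyl J \<omega>) = W (J, \<omega>)"
    by (rule bexE)
  have Q: "Q \<in> PS" "\<And>J \<omega>. finite J \<Longrightarrow> \<omega> \<in> PiE J (\<lambda>_. A) \<Longrightarrow> measure Q (cyl J \<omega>) = W (J, \<omega>)"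
    using Q1 Q2 by auto
  have "convm (Qk \<circ> r) Q"
    unfolding convm_def
  proof (intro allI impI)
    fix J :: "'s list set" and \<omega> assume J: "finite J"
    show "(\<lambda>k. measure ((Qk \<circ> r) k) (cyl J \<omega>)) \<longlonglongrightarrow> measure Q (cyl J \<omega>)"
    proof (cases "\<omega> \<in> PiE J (\<lambda>_. A)")
      case True
      then show ?thesis using lim[OF J True] Q(2)[OF J True] by (simp add: o_def)
    next
      case False
      then show ?thesis using cyl_empty[OF False] by simp
    qed
  qed
  then show ?thesis using r(1) Q(1) by blast
qed

end


locale prob = ctx \<beta> \<pi> \<zeta> p A X x0
  for \<beta> :: real and \<pi> :: "'s::finite \<Rightarrow> 's \<Rightarrow> real" and \<zeta> :: "'x \<Rightarrow> real^'n \<Rightarrow> 's \<Rightarrow> 'x"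
    and p :: "'x \<Rightarrow> real^'n \<Rightarrow> 's \<Rightarrow> real" and A :: "(real^'n) set" and X :: "'x set" and x0 :: 'x +
  fixes r :: "'x \<Rightarrow> real^'n \<Rightarrow> 's \<Rightarrow> real" and g :: "'i::finite \<Rightarrow> 'x \<Rightarrow> real^'n \<Rightarrow> 's \<Rightarrow> real"
    and gbar :: "'i \<Rightarrow> real" and s0 :: 's and a0 :: "'s list \<Rightarrow> real^'n"
  assumes r_bdd: "\<exists>B. \<forall>y\<in>X. \<forall>c\<in>A. \<forall>s. \<bar>r y c s\<bar> \<le> B"
    and g_bdd: "\<And>i. \<exists>B. \<forall>y\<in>X. \<forall>c\<in>A. \<forall>s. \<bar>g i y c s\<bar> \<le> B"
    and a0: "det_feasible \<beta> \<pi> \<zeta> p A g gbar x0 s0 a0"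
begin

definition "Br = (SOME B. bndf r B)"
definition "Bg i = (SOME B. bndf (g i) B)"

lemma bndf_r: "bndf r Br"
  unfolding Br_def bndf_def using r_bdd by (rule someI_ex)

lemma bndf_g: "bndf (g i) (Bg i)"
  unfolding Bg_def bndf_def using g_bdd[of i] by (rule someI_ex)

definition feas where "feas P \<longleftrightarrow> lottery_feasible \<beta> \<pi> \<zeta> p A g gbar x0 s0 P"
definition obj where "obj \<gamma> P = objective \<beta> \<pi> \<zeta> r g \<gamma> x0 s0 P"
definition Rv where "Rv P = (\<integral>a. disc \<beta> \<pi> [s0] (flow \<zeta> a x0 r) \<partial>P)"
definition Gi where "Gi i P = (\<integral>a. disc \<beta> \<pi> [s0] (flow \<zeta> a x0 (g i)) \<partial>P)"

lemma feas_iff: "feas P \<longleftrightarrow> P \<in> PS \<and> (\<forall>h atil i. h \<noteq> [] \<longrightarrow> hd h = s0 \<longrightarrow> length atil = length h - 1 \<longrightarrow> set atil \<subseteq> A \<longrightarrow>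
        (\<integral>a. ind h atil a * (disc \<beta> \<pi> h (flow \<zeta> a x0 (g i)) - gbar i) \<partial>P) \<ge> 0)"
  unfolding feas_def lottery_feasible_def PS_def ind_def by simp

lemma feas_PS: "feas P \<Longrightarrow> P \<in> PS"
  using feas_iff by blast

lemma good_R: "good (\<lambda>a. disc \<beta> \<pi> [s0] (flow \<zeta> a x0 r))"
  by (rule disc_good[OF bndf_r])

lemma good_G: "good (\<lambda>a. disc \<beta> \<pi> [s0] (flow \<zeta> a x0 (g i)))"
  by (rule disc_good[OF bndf_g])

lemma obj_lin:
  assumes "P \<in> PS"
  shows "obj \<gamma> P = Rv P + (\<Sum>i\<in>UNIV. \<gamma> $ i * Gi i P)"
proof -
  have "obj \<gamma> P = (\<integral>a. disc \<beta> \<pi> [s0] (flow \<zeta> a x0 r) + (\<Sum>i\<in>UNIV. \<gamma> $ i * disc \<beta> \<pi> [s0] (flow \<zeta> a x0 (g i))) \<partial>P)"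
    unfolding obj_def objective_def
    by (rule Bochner_Integration.integral_cong[OF refl])
       (rule disc_lin[OF _ bndf_r finite_class.finite_UNIV bndf_g], simp add: PS_space[OF assms])
  also have "\<dots> = Rv P + (\<integral>a. (\<Sum>i\<in>UNIV. \<gamma> $ i * disc \<beta> \<pi> [s0] (flow \<zeta> a x0 (g i))) \<partial>P)"
    unfolding Rv_def
    by (rule Bochner_Integration.integral_add)
       (auto intro!: good_integrable[OF _ assms] good_R good_sum good_scale good_G)
  also have "(\<integral>a. (\<Sum>i\<in>UNIV. \<gamma> $ i * disc \<beta> \<pi> [s0] (flow \<zeta> a x0 (g i))) \<partial>P) = (\<Sum>i\<in>UNIV. \<gamma> $ i * Gi i P)"
    unfolding Gi_def
    by (subst Bochner_Integration.integral_sum)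
       (auto intro!: good_integrable[OF _ assms] good_scale good_G)
  finally show ?thesis .
qed

lemma good_int_bound: "good F \<Longrightarrow> \<exists>B. \<forall>P\<in>PS. \<bar>integral\<^sup>L P F\<bar> \<le> B"
proof -
  assume F: "good F"
  then obtain B where B: "\<forall>a\<in>Om. \<bar>F a\<bar> \<le> B" using good_bounded by blast
  have "\<bar>integral\<^sup>L P F\<bar> \<le> B" if P: "P \<in> PS" for P
  proof -
    have "\<bar>integral\<^sup>L P F - integral\<^sup>L P (\<lambda>a. 0)\<bar> \<le> B"
      by (rule integral_close[OF P good_integrable[OF F P]]) (use B in auto)
    then show ?thesis by simp
  qed
  then show ?thesis by blast
qed

lemma feas_nonempty: "feas (return M0 a0)"
proof -
  have a0Om: "a0 \<in> Om" using a0 by (simp add: det_feasible_def)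
  have P: "return M0 a0 \<in> PS"
    unfolding PS_def using a0Om by (auto intro!: prob_space_return simp: space_M0)
  show ?thesis
    unfolding feas_iff
  proof (intro conjI P allI impI)
    fix h :: "'s list" and atil :: "(real^'n) list" and i
    assume h: "h \<noteq> []" "hd h = s0"
    have "(\<integral>a. ind h atil a * (disc \<beta> \<pi> h (flow \<zeta> a x0 (g i)) - gbar i) \<partial>return M0 a0) =
        ind h atil a0 * (disc \<beta> \<pi> h (flow \<zeta> a0 x0 (g i)) - gbar i)"
      by (rule integral_return) (use a0Om good_measurable[OF constr_good[OF bndf_g] P] in \<open>auto simp: space_M0\<close>)
    also have "\<dots> \<ge> 0"
      using a0 h unfolding det_feasible_def by (auto simp: ind_def)
    finally show "(\<integral>a. ind h atil a * (disc \<beta> \<pi> h (flow \<zeta> a x0 (g i)) - gbar i) \<partial>return M0 a0) \<ge> 0" .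
  qed
qed

lemma feas_limit:
  assumes Pk: "\<And>k. feas (Pk k)" and Q: "Q \<in> PS" and cv: "convm Pk Q"
  shows "feas Q"
  unfolding feas_iff
proof (intro conjI Q allI impI)
  fix h :: "'s list" and atil :: "(real^'n) list" and i
  assume h: "h \<noteq> []" "hd h = s0" "length atil = length h - 1" "set atil \<subseteq> A"
  have "(\<lambda>k. \<integral>a. ind h atil a * (disc \<beta> \<pi> h (flow \<zeta> a x0 (g i)) - gbar i) \<partial>Pk k)
     \<longlonglongrightarrow> (\<integral>a. ind h atil a * (disc \<beta> \<pi> h (flow \<zeta> a x0 (g i)) - gbar i) \<partial>Q)"
    by (rule conv_good[OF feas_PS[OF Pk] Q cv constr_good[OF bndf_g]])
  then show "(\<integral>a. ind h atil a * (disc \<beta> \<pi> h (flow \<zeta> a x0 (g i)) - gbar i) \<partial>Q) \<ge> 0"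
    by (rule LIMSEQ_le_const) (use Pk h in \<open>auto simp: feas_iff\<close>)
qed

lemma Gi_limit:
  assumes "\<And>k. Pk k \<in> PS" "Q \<in> PS" "convm Pk Q"
  shows "(\<lambda>k. Gi i (Pk k)) \<longlonglongrightarrow> Gi i Q"
  unfolding Gi_def by (rule conv_good[OF assms good_G])

lemma Rv_limit:
  assumes "\<And>k. Pk k \<in> PS" "Q \<in> PS" "convm Pk Q"
  shows "(\<lambda>k. Rv (Pk k)) \<longlonglongrightarrow> Rv Q"
  unfolding Rv_def by (rule conv_good[OF assms good_R])

lemma obj_limit:
  assumes "\<And>k. Pk k \<in> PS" "Q \<in> PS" "convm Pk Q"
  shows "(\<lambda>k. obj \<gamma> (Pk k)) \<longlonglongrightarrow> obj \<gamma> Q"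
  unfolding obj_lin[OF assms(1)] obj_lin[OF assms(2)]
  by (intro tendsto_add tendsto_sum tendsto_mult_left Rv_limit Gi_limit assms)

end


context prob
begin

lemma mix:
  assumes P1: "P1 \<in> PS" and P2: "P2 \<in> PS" and t: "0 \<le> t" "t \<le> 1"
  shows "\<exists>P\<in>PS. \<forall>F. good F \<longrightarrow> integral\<^sup>L P F = t * integral\<^sup>L P1 F + (1 - t) * integral\<^sup>L P2 F"
proof -
  define B where "B = measure_pmf (bernoulli_pmf t)"
  define N where "N b = (if b then P1 else P2)" for b
  have sN: "sets (N b) = sets P1" for b using PS_sets[OF P1] PS_sets[OF P2] by (simp add: N_def)
  have pN: "prob_space (N b)" for b using PS_prob[OF P1] PS_prob[OF P2] by (simp add: N_def)
  have Nm: "N \<in> measurable B (subprob_algebra P1)"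
    unfolding B_def measurable_pmf_measure1 space_subprob_algebra
    using sN pN prob_space_imp_subprob_space by auto
  have spB: "space B \<noteq> {}" by (simp add: B_def)
  define Pm where "Pm = bind B N"
  have sPm: "sets Pm = sets P1"
    unfolding Pm_def by (rule sets_bind[OF _ spB]) (rule sN)
  have pPm: "prob_space Pm"
  proof -
    interpret prob_space B by (simp add: B_def prob_space_measure_pmf)
    show ?thesis unfolding Pm_def by (rule prob_space_bind[OF _ Nm]) (simp add: pN)
  qed
  have PmPS: "Pm \<in> PS" using sPm pPm PS_sets[OF P1] by (simp add: PS_def)
  have "integral\<^sup>L Pm F = t * integral\<^sup>L P1 F + (1 - t) * integral\<^sup>L P2 F" if F: "good F" for F
  proof -
    obtain C where C: "\<forall>a\<in>Om. \<bar>F a\<bar> \<le> C" using good_bounded[OF F] by blast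
    have "integral\<^sup>L Pm F = (\<integral>b. integral\<^sup>L (N b) F \<partial>B)"
      unfolding Pm_def
    proof (rule integral_bind[OF good_measurable[OF F P1] _ Nm])
      show "\<And>x. x \<in> space P1 \<Longrightarrow> \<bar>F x\<bar> \<le> C" using C PS_space[OF P1] by simp
      show "finite_measure B"
      proof -
        interpret prob_space B by (simp add: B_def prob_space_measure_pmf)
        show ?thesis by (rule finite_measure_axioms)
      qed
      show "AE x in B. emeasure (N x) (space (N x)) \<le> ennreal 1"
        by (rule AE_I2) (simp add: prob_space.emeasure_space_1[OF pN])
    qed
    also have "\<dots> = integral\<^sup>L P1 F * t + integral\<^sup>L P2 F * (1 - t)"
      unfolding B_def by (subst integral_bernoulli_pmf[OF t]) (simp add: N_def)
    finally show ?thesis by (simp add: algebra_simps)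
  qed
  then show ?thesis using PmPS by blast
qed

definition "FS = {P. feas P}"
definition "V \<gamma> = Sup (obj \<gamma> ` FS)"
definition "Gvec P = (\<chi> i. Gi i P)"

lemma FS_ne: "FS \<noteq> {}"
  using feas_nonempty unfolding FS_def by blast

lemma Gi_bound: "\<exists>B. \<forall>P\<in>PS. \<bar>Gi i P\<bar> \<le> B"
  unfolding Gi_def by (rule good_int_bound[OF good_G])

lemma Rv_bound: "\<exists>B. \<forall>P\<in>PS. \<bar>Rv P\<bar> \<le> B"
  unfolding Rv_def by (rule good_int_bound[OF good_R])

lemma obj_bound: "\<exists>B. \<forall>P\<in>PS. \<bar>obj \<gamma> P\<bar> \<le> B"
proof -
  obtain BR where BR: "\<forall>P\<in>PS. \<bar>Rv P\<bar> \<le> BR" using Rv_bound by blast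
  have "\<forall>i. \<exists>B. \<forall>P\<in>PS. \<bar>Gi i P\<bar> \<le> B" using Gi_bound by blast
  then obtain BG where BG: "\<And>i P. P \<in> PS \<Longrightarrow> \<bar>Gi i P\<bar> \<le> BG i" by metis
  have "\<bar>obj \<gamma> P\<bar> \<le> BR + (\<Sum>i\<in>UNIV. \<bar>\<gamma> $ i\<bar> * BG i)" if P: "P \<in> PS" for P
  proof -
    have "\<bar>obj \<gamma> P\<bar> \<le> \<bar>Rv P\<bar> + \<bar>\<Sum>i\<in>UNIV. \<gamma> $ i * Gi i P\<bar>"
      unfolding obj_lin[OF P] by (rule abs_triangle_ineq)
    also have "\<bar>\<Sum>i\<in>UNIV. \<gamma> $ i * Gi i P\<bar> \<le> (\<Sum>i\<in>UNIV. \<bar>\<gamma> $ i * Gi i P\<bar>)" by (rule sum_abs)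
    also have "\<dots> \<le> (\<Sum>i\<in>UNIV. \<bar>\<gamma> $ i\<bar> * BG i)"
      by (rule sum_mono) (simp add: abs_mult mult_left_mono BG[OF P])
    finally show ?thesis using BR[rule_format, OF P] by linarith
  qed
  then show ?thesis by blast
qed

lemma bdd_obj: "bdd_above (obj \<gamma> ` FS)"
proof -
  obtain B where "\<forall>P\<in>PS. \<bar>obj \<gamma> P\<bar> \<le> B" using obj_bound by blast
  then have "\<forall>P\<in>FS. obj \<gamma> P \<le> B" using feas_PS unfolding FS_def by fastforce
  then show ?thesis by (auto simp: bdd_above_def)
qed

lemma V_upper: "feas P \<Longrightarrow> obj \<gamma> P \<le> V \<gamma>"
  unfolding V_def by (rule cSup_upper) (use bdd_obj FS_def in auto)

lemma V_approx: "e > 0 \<Longrightarrow> \<exists>P. feas P \<and> obj \<gamma> P > V \<gamma> - e"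
proof -
  assume "e > 0"
  then have "V \<gamma> - e < Sup (obj \<gamma> ` FS)" unfolding V_def by simp
  moreover have ne: "obj \<gamma> ` FS \<noteq> {}" using FS_ne by blast
  ultimately obtain y where "y \<in> obj \<gamma> ` FS" "V \<gamma> - e < y"
    using less_cSup_iff[OF ne bdd_obj] by blast
  then show ?thesis unfolding FS_def by blast
qed

lemma obj_shift:
  assumes "P \<in> PS"
  shows "obj \<gamma>' P = obj \<gamma> P + Gvec P \<bullet> (\<gamma>' - \<gamma>)"
  using assms by (simp add: obj_lin inner_vec_def Gvec_def algebra_simps sum.distrib sum_subtractf)

end


context prob
begin

definition "Cset \<phi> = {P. feas P \<and> (\<forall>i. \<phi> $ i \<le> Gi i P)}"

lemma lim_lower: "(\<lambda>k. c - 1 / real (Suc k)) \<longlonglongrightarrow> c"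
proof -
  have "(\<lambda>k. c - inverse (real (Suc k))) \<longlonglongrightarrow> c - 0"
    by (intro tendsto_diff tendsto_const LIMSEQ_inverse_real_of_nat)
  then show ?thesis by (simp add: inverse_eq_divide)
qed

lemma dir1:
  assumes W: "Sup ((\<lambda>P. ereal (obj \<gamma> P)) ` Cset \<phi>) = ereal (V \<gamma>)"
  shows "\<exists>\<phi>D \<in> subdifferential V \<gamma>. \<forall>i. \<phi> $ i \<le> \<phi>D $ i"
proof -
  have "\<exists>P. P \<in> Cset \<phi> \<and> obj \<gamma> P > V \<gamma> - 1 / Suc n" for n
  proof (rule ccontr)
    assume "\<not> ?thesis"
    then have "\<forall>P\<in>Cset \<phi>. ereal (obj \<gamma> P) \<le> ereal (V \<gamma> - 1 / Suc n)" by auto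
    then have "Sup ((\<lambda>P. ereal (obj \<gamma> P)) ` Cset \<phi>) \<le> ereal (V \<gamma> - 1 / Suc n)"
      by (intro Sup_least) auto
    then show False using W by simp
  qed
  then obtain Pn where Pn: "\<And>n. Pn n \<in> Cset \<phi>" "\<And>n. obj \<gamma> (Pn n) > V \<gamma> - 1 / Suc n" by metis
  have Pf: "feas (Pn n)" for n using Pn(1) by (simp add: Cset_def)
  obtain r Q where r: "strict_mono r" and Q: "Q \<in> PS" and cv: "convm (Pn \<circ> r) Q"
    using compact_PS[of Pn] feas_PS[OF Pf] by blast
  have PS': "(Pn \<circ> r) k \<in> PS" for k using feas_PS[OF Pf] by simp
  have Qf: "feas Q" by (rule feas_limit[OF _ Q cv]) (simp add: Pf)
  have QG: "\<phi> $ i \<le> Gi i Q" for i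
    by (rule LIMSEQ_le_const[OF Gi_limit[OF PS' Q cv]]) (use Pn(1) in \<open>auto simp: Cset_def\<close>)
  have "V \<gamma> \<le> obj \<gamma> Q"
  proof (rule LIMSEQ_le[OF lim_lower obj_limit[OF PS' Q cv]])
    show "\<exists>N. \<forall>n\<ge>N. V \<gamma> - 1 / real (Suc n) \<le> obj \<gamma> ((Pn \<circ> r) n)"
    proof (intro exI allI impI)
      fix n :: nat
      have "n \<le> r n" using seq_suble[OF r] .
      then have "1 / real (Suc (r n)) \<le> 1 / real (Suc n)" by (simp add: frac_le)
      then show "V \<gamma> - 1 / real (Suc n) \<le> obj \<gamma> ((Pn \<circ> r) n)" using Pn(2)[of "r n"] by simp
    qed
  qed
  then have QV: "obj \<gamma> Q = V \<gamma>" using V_upper[OF Qf, of \<gamma>] by linarith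
  have "Gvec Q \<in> subdifferential V \<gamma>"
    unfolding subdifferential_def
  proof (intro CollectI allI)
    fix y'
    have "V y' \<ge> obj y' Q" by (rule V_upper[OF Qf])
    also have "obj y' Q = V \<gamma> + Gvec Q \<bullet> (y' - \<gamma>)" using obj_shift[OF Q, of y' \<gamma>] QV by simp
    finally show "V \<gamma> + Gvec Q \<bullet> (y' - \<gamma>) \<le> V y'" .
  qed
  moreover have "\<forall>i. \<phi> $ i \<le> Gvec Q $ i" using QG by (simp add: Gvec_def)
  ultimately show ?thesis by blast
qed

end


context prob
begin

lemma lim_lower2: "(\<lambda>k. c - K / real (Suc k)) \<longlonglongrightarrow> c"
proof -
  have "(\<lambda>k. c - K * inverse (real (Suc k))) \<longlonglongrightarrow> c - K * 0"
    by (intro tendsto_diff tendsto_const tendsto_mult LIMSEQ_inverse_real_of_nat)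
  then show ?thesis by (simp add: inverse_eq_divide)
qed

definition "Sset \<gamma> = {v :: real^'i. \<exists>Q. feas Q \<and> obj \<gamma> Q = V \<gamma> \<and> (\<forall>i. v $ i \<le> Gi i Q)}"

lemma Sset_convex: "convex (Sset \<gamma>)"
  unfolding convex_def
proof (intro ballI allI impI)
  fix x y :: "real^'i" and u v :: real
  assume x: "x \<in> Sset \<gamma>" and y: "y \<in> Sset \<gamma>" and uv: "0 \<le> u" "0 \<le> v" "u + v = 1"
  obtain Q1 where Q1: "feas Q1" "obj \<gamma> Q1 = V \<gamma>" "\<And>i. x $ i \<le> Gi i Q1" using x by (auto simp: Sset_def)
  obtain Q2 where Q2: "feas Q2" "obj \<gamma> Q2 = V \<gamma>" "\<And>i. y $ i \<le> Gi i Q2" using y by (auto simp: Sset_def)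
  have u1: "u \<le> 1" and v: "v = 1 - u" using uv by auto
  obtain Pm where Pm: "Pm \<in> PS" and mixF: "\<And>F. good F \<Longrightarrow> integral\<^sup>L Pm F = u * integral\<^sup>L Q1 F + (1 - u) * integral\<^sup>L Q2 F"
    using mix[OF feas_PS[OF Q1(1)] feas_PS[OF Q2(1)] uv(1) u1] by blast
  have GPm: "Gi i Pm = u * Gi i Q1 + (1 - u) * Gi i Q2" for i unfolding Gi_def by (rule mixF[OF good_G])
  have RPm: "Rv Pm = u * Rv Q1 + (1 - u) * Rv Q2" unfolding Rv_def by (rule mixF[OF good_R])
  have fPm: "feas Pm"
    unfolding feas_iff
  proof (intro conjI Pm allI impI)
    fix h :: "'s list" and atil :: "(real^'n) list" and i
    assume h: "h \<noteq> []" "hd h = s0" "length atil = length h - 1" "set atil \<subseteq> A"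
    let ?F = "\<lambda>a. ind h atil a * (disc \<beta> \<pi> h (flow \<zeta> a x0 (g i)) - gbar i)"
    have "integral\<^sup>L Q1 ?F \<ge> 0" "integral\<^sup>L Q2 ?F \<ge> 0" using Q1(1) Q2(1) h by (auto simp: feas_iff)
    moreover have "integral\<^sup>L Pm ?F = u * integral\<^sup>L Q1 ?F + (1 - u) * integral\<^sup>L Q2 ?F"
      by (rule mixF[OF constr_good[OF bndf_g]])
    ultimately show "integral\<^sup>L Pm ?F \<ge> 0" using uv u1 by simp
  qed
  have sl: "(\<Sum>i\<in>UNIV. \<gamma> $ i * (u * Gi i Q1 + (1 - u) * Gi i Q2)) = u * (\<Sum>i\<in>UNIV. \<gamma> $ i * Gi i Q1) + (1 - u) * (\<Sum>i\<in>UNIV. \<gamma> $ i * Gi i Q2)"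
    unfolding sum_distrib_left sum.distrib[symmetric] by (rule sum.cong) (simp_all add: algebra_simps)
  have "obj \<gamma> Pm = u * obj \<gamma> Q1 + (1 - u) * obj \<gamma> Q2"
    unfolding obj_lin[OF Pm] obj_lin[OF feas_PS[OF Q1(1)]] obj_lin[OF feas_PS[OF Q2(1)]] GPm RPm sl
    by (simp add: algebra_simps)
  then have oPm: "obj \<gamma> Pm = V \<gamma>" using Q1(2) Q2(2) by (simp add: algebra_simps)
  have "(u *\<^sub>R x + v *\<^sub>R y) $ i \<le> Gi i Pm" for i
  proof -
    have "u * x $ i \<le> u * Gi i Q1" using Q1(3) uv by (simp add: mult_left_mono)
    moreover have "(1 - u) * y $ i \<le> (1 - u) * Gi i Q2" using Q2(3) u1 by (simp add: mult_left_mono)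
    ultimately show ?thesis unfolding GPm v by simp
  qed
  then show "u *\<^sub>R x + v *\<^sub>R y \<in> Sset \<gamma>" using fPm oPm by (auto simp: Sset_def)
qed

lemma Sset_closed: "closed (Sset \<gamma>)"
  unfolding closed_sequential_limits
proof (intro allI impI, elim conjE)
  fix x :: "nat \<Rightarrow> real^'i" and l
  assume xS: "\<forall>n. x n \<in> Sset \<gamma>" and xl: "x \<longlonglongrightarrow> l"
  then have "\<forall>n. \<exists>Q. feas Q \<and> obj \<gamma> Q = V \<gamma> \<and> (\<forall>i. x n $ i \<le> Gi i Q)" by (simp add: Sset_def)
  then obtain Qn where Qn: "\<And>n. feas (Qn n)" "\<And>n. obj \<gamma> (Qn n) = V \<gamma>" "\<And>n i. x n $ i \<le> Gi i (Qn n)"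
    by metis
  obtain r Q where r: "strict_mono r" and Q: "Q \<in> PS" and cv: "convm (Qn \<circ> r) Q"
    using compact_PS[of Qn] feas_PS[OF Qn(1)] by blast
  have PS': "(Qn \<circ> r) k \<in> PS" for k using feas_PS[OF Qn(1)] by simp
  have Qf: "feas Q" by (rule feas_limit[OF _ Q cv]) (simp add: Qn(1))
  have "(\<lambda>k. obj \<gamma> ((Qn \<circ> r) k)) \<longlonglongrightarrow> obj \<gamma> Q" by (rule obj_limit[OF PS' Q cv])
  then have "(\<lambda>k. V \<gamma>) \<longlonglongrightarrow> obj \<gamma> Q" using Qn(2) by simp
  then have QV: "obj \<gamma> Q = V \<gamma>" using LIMSEQ_unique[OF tendsto_const] by metis
  have "l $ i \<le> Gi i Q" for i
  proof (rule LIMSEQ_le[OF _ Gi_limit[OF PS' Q cv]])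
    have "(x \<circ> r) \<longlonglongrightarrow> l" by (rule LIMSEQ_subseq_LIMSEQ[OF xl r])
    then show "(\<lambda>k. x (r k) $ i) \<longlonglongrightarrow> l $ i" by (intro tendsto_vec_nth) (simp add: o_def)
    show "\<exists>N. \<forall>n\<ge>N. x (r n) $ i \<le> Gi i ((Qn \<circ> r) n)" using Qn(3) by auto
  qed
  then show "l \<in> Sset \<gamma>" using Qf QV by (auto simp: Sset_def)
qed

end


context prob
begin

lemma Gvec_inner: "Gvec P \<bullet> l = (\<Sum>i\<in>UNIV. Gi i P * l $ i)"
  by (simp add: inner_vec_def Gvec_def)

lemma Gvec_inner_bound: "\<exists>K. K \<ge> 0 \<and> (\<forall>P\<in>PS. \<bar>Gvec P \<bullet> l\<bar> \<le> K)"
proof -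
  have "\<forall>i. \<exists>B. \<forall>P\<in>PS. \<bar>Gi i P\<bar> \<le> B" using Gi_bound by blast
  then obtain BG where BG: "\<And>i P. P \<in> PS \<Longrightarrow> \<bar>Gi i P\<bar> \<le> BG i" by metis
  have "\<bar>Gvec P \<bullet> l\<bar> \<le> (\<Sum>i\<in>UNIV. BG i * \<bar>l $ i\<bar>)" if P: "P \<in> PS" for P
  proof -
    have "\<bar>Gvec P \<bullet> l\<bar> \<le> (\<Sum>i\<in>UNIV. \<bar>Gi i P * l $ i\<bar>)" unfolding Gvec_inner by (rule sum_abs)
    also have "\<dots> \<le> (\<Sum>i\<in>UNIV. BG i * \<bar>l $ i\<bar>)"
      by (rule sum_mono) (simp add: abs_mult mult_right_mono BG[OF P])
    finally show ?thesis .
  qed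
  moreover have "(\<Sum>i\<in>UNIV. BG i * \<bar>l $ i\<bar>) \<ge> 0"
  proof -
    obtain P where "P \<in> PS" using feas_nonempty feas_PS by blast
    then have "\<bar>Gvec P \<bullet> l\<bar> \<le> (\<Sum>i\<in>UNIV. BG i * \<bar>l $ i\<bar>)" using calculation by blast
    then show ?thesis by linarith
  qed
  ultimately show ?thesis by blast
qed

lemma attain:
  assumes sub: "\<phi>D \<in> subdifferential V \<gamma>"
  shows "\<exists>Q. feas Q \<and> obj \<gamma> Q = V \<gamma> \<and> (\<forall>i. \<phi>D $ i \<le> Gi i Q)"
proof (rule ccontr)
  assume nex: "\<not> ?thesis"
  then have "\<phi>D \<notin> Sset \<gamma>" by (auto simp: Sset_def)
  from separating_hyperplane_closed_point[OF Sset_convex Sset_closed this]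
  obtain a b where ab: "a \<bullet> \<phi>D < b" "\<forall>x\<in>Sset \<gamma>. b < a \<bullet> x" by blast
  define l where "l = - a"
  define D where "D = \<phi>D \<bullet> l"
  obtain K0 where K0: "K0 \<ge> 0" "\<And>P. P \<in> PS \<Longrightarrow> \<bar>Gvec P \<bullet> l\<bar> \<le> K0" using Gvec_inner_bound by blast
  define K where "K = \<bar>D\<bar> + K0 + 1"
  have K0': "K \<ge> 0" using K0 by (simp add: K_def)
  have step: "\<exists>P. feas P \<and> Gvec P \<bullet> l \<ge> D - 1 / Suc k \<and> obj \<gamma> P \<ge> V \<gamma> - K / Suc k" for k
  proof -
    define t where "t = 1 / real (Suc k)"
    have t: "0 < t" "t \<le> 1" by (auto simp: t_def)
    define \<gamma>k where "\<gamma>k = \<gamma> + t *\<^sub>R l"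
    obtain P where Pf: "feas P" and Pa: "obj \<gamma>k P > V \<gamma>k - t * t"
      using V_approx[of "t * t" \<gamma>k] t by auto
    have PPS: "P \<in> PS" by (rule feas_PS[OF Pf])
    have s1: "V \<gamma> + \<phi>D \<bullet> (\<gamma>k - \<gamma>) \<le> V \<gamma>k" using sub unfolding subdifferential_def by blast
    have s2: "\<phi>D \<bullet> (\<gamma>k - \<gamma>) = t * D" by (simp add: \<gamma>k_def D_def)
    have subg: "V \<gamma>k \<ge> V \<gamma> + t * D" using s1 s2 by linarith
    have shift: "obj \<gamma>k P = obj \<gamma> P + t * (Gvec P \<bullet> l)"
      using obj_shift[OF PPS, of \<gamma>k \<gamma>] by (simp add: \<gamma>k_def)
    have up: "obj \<gamma> P \<le> V \<gamma>" by (rule V_upper[OF Pf])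
    define Gk where "Gk = Gvec P \<bullet> l"
    have main: "obj \<gamma> P + t * Gk > V \<gamma> + t * D - t * t"
      using Pa subg shift unfolding Gk_def by linarith
    have "t * (Gk - D + t) > 0" using main up by (simp add: algebra_simps)
    then have "Gk - D + t > 0" using t by (simp add: zero_less_mult_iff)
    then have A1: "Gvec P \<bullet> l \<ge> D - 1 / Suc k" unfolding Gk_def t_def by simp
    have "\<bar>Gk\<bar> \<le> K0" unfolding Gk_def by (rule K0(2)[OF PPS])
    then have "D - Gk \<ge> - (\<bar>D\<bar> + K0)" by linarith
    then have "t * (D - Gk) \<ge> t * (- (\<bar>D\<bar> + K0))" using t by (intro mult_left_mono) auto
    moreover have "t * t \<le> t * 1" using t by (intro mult_left_mono) auto
    ultimately have "obj \<gamma> P \<ge> V \<gamma> - t * K"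
      using main unfolding K_def by (simp add: algebra_simps)
    then have A2: "obj \<gamma> P \<ge> V \<gamma> - K / Suc k" unfolding t_def by simp
    show ?thesis using Pf A1 A2 by blast
  qed
  then obtain Pk where Pk: "\<And>k. feas (Pk k)" "\<And>k. Gvec (Pk k) \<bullet> l \<ge> D - 1 / Suc k"
      "\<And>k. obj \<gamma> (Pk k) \<ge> V \<gamma> - K / Suc k" by metis
  obtain r Q where r: "strict_mono r" and Q: "Q \<in> PS" and cv: "convm (Pk \<circ> r) Q"
    using compact_PS[of Pk] feas_PS[OF Pk(1)] by blast
  have PS': "(Pk \<circ> r) k \<in> PS" for k using feas_PS[OF Pk(1)] by simp
  have Qf: "feas Q" by (rule feas_limit[OF _ Q cv]) (simp add: Pk(1))
  have "V \<gamma> \<le> obj \<gamma> Q"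
  proof (rule LIMSEQ_le[OF lim_lower2 obj_limit[OF PS' Q cv]])
    show "\<exists>N. \<forall>n\<ge>N. V \<gamma> - K / real (Suc n) \<le> obj \<gamma> ((Pk \<circ> r) n)"
    proof (intro exI allI impI)
      fix n :: nat
      have "n \<le> r n" using seq_suble[OF r] .
      then have "K / real (Suc (r n)) \<le> K / real (Suc n)" using K0' by (simp add: frac_le)
      then show "V \<gamma> - K / real (Suc n) \<le> obj \<gamma> ((Pk \<circ> r) n)" using Pk(3)[of "r n"] by simp
    qed
  qed
  then have QV: "obj \<gamma> Q = V \<gamma>" using V_upper[OF Qf, of \<gamma>] by linarith
  have "D \<le> Gvec Q \<bullet> l"
  proof (rule LIMSEQ_le[OF lim_lower])
    show "(\<lambda>k. Gvec ((Pk \<circ> r) k) \<bullet> l) \<longlonglongrightarrow> Gvec Q \<bullet> l"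
      unfolding Gvec_inner by (intro tendsto_sum tendsto_mult_right Gi_limit[OF PS' Q cv])
    show "\<exists>N. \<forall>n\<ge>N. D - 1 / real (Suc n) \<le> Gvec ((Pk \<circ> r) n) \<bullet> l"
    proof (intro exI allI impI)
      fix n :: nat
      have "n \<le> r n" using seq_suble[OF r] .
      then have "1 / real (Suc (r n)) \<le> 1 / real (Suc n)" by (simp add: frac_le)
      then show "D - 1 / real (Suc n) \<le> Gvec ((Pk \<circ> r) n) \<bullet> l" using Pk(2)[of "r n"] by simp
    qed
  qed
  moreover have "Gvec Q \<in> Sset \<gamma>" using Qf QV by (auto simp: Sset_def Gvec_def)
  then have "b < a \<bullet> Gvec Q" using ab(2) by blast
  ultimately show False using ab(1) unfolding l_def D_def by (simp add: inner_commute)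
qed

lemma dir2:
  assumes sub: "\<phi>D \<in> subdifferential V \<gamma>" and le: "\<forall>i. \<phi> $ i \<le> \<phi>D $ i"
  shows "Sup ((\<lambda>P. ereal (obj \<gamma> P)) ` Cset \<phi>) = ereal (V \<gamma>)"
proof (rule antisym)
  show "Sup ((\<lambda>P. ereal (obj \<gamma> P)) ` Cset \<phi>) \<le> ereal (V \<gamma>)"
    by (rule Sup_least) (auto simp: Cset_def intro: V_upper)
  obtain Q where Q: "feas Q" "obj \<gamma> Q = V \<gamma>" "\<And>i. \<phi>D $ i \<le> Gi i Q" using attain[OF sub] by blast
  have "Q \<in> Cset \<phi>" using Q le order.trans unfolding Cset_def by blast
  then have "ereal (obj \<gamma> Q) \<le> Sup ((\<lambda>P. ereal (obj \<gamma> P)) ` Cset \<phi>)" by (intro Sup_upper) auto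
  then show "ereal (V \<gamma>) \<le> Sup ((\<lambda>P. ereal (obj \<gamma> P)) ` Cset \<phi>)" using Q(2) by simp
qed

end


theorem corollary5p3:
  fixes \<pi> :: "'s::finite \<Rightarrow> 's \<Rightarrow> real"
    and A :: "(real^'n) set" and X :: "(real^'m) set"
    and \<zeta> :: "real^'m \<Rightarrow> real^'n \<Rightarrow> 's \<Rightarrow> real^'m"
    and p r :: "real^'m \<Rightarrow> real^'n \<Rightarrow> 's \<Rightarrow> real"
    and g :: "'i::finite \<Rightarrow> real^'m \<Rightarrow> real^'n \<Rightarrow> 's \<Rightarrow> real"
    and gbar :: "'i \<Rightarrow> real" and \<beta> :: real
    and \<gamma> \<phi> :: "real^'i" and x :: "real^'m" and s :: 's
  assumes pi_pos: "\<And>s s'. \<pi> s s' > 0"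
    and pi_sum: "\<And>s. (\<Sum>s'\<in>UNIV. \<pi> s s') = 1"
    and A_fin: "finite A"
    and X_cnt: "countable X"
    and zeta_X: "\<And>y a s. y \<in> X \<Longrightarrow> a \<in> A \<Longrightarrow> \<zeta> y a s \<in> X"
    and r_bdd: "\<exists>B. \<forall>y\<in>X. \<forall>a\<in>A. \<forall>s. \<bar>r y a s\<bar> \<le> B"
    and g_bdd: "\<And>i. \<exists>B. \<forall>y\<in>X. \<forall>a\<in>A. \<forall>s. \<bar>g i y a s\<bar> \<le> B"
    and beta: "0 < \<beta>" "\<beta> < 1"
    and standing: "\<And>x0 s0. x0 \<in> X \<Longrightarrow> \<exists>a. det_feasible \<beta> \<pi> \<zeta> p A g gbar x0 s0 a"
    and gamma_nonneg: "\<And>i. \<gamma> $ i \<ge> 0"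
    and x_X: "x \<in> X"
  shows "Wval \<beta> \<pi> \<zeta> p A r g gbar \<gamma> x s \<phi> = ereal (Vval \<beta> \<pi> \<zeta> p A r g gbar \<gamma> x s)
     \<longleftrightarrow> (\<exists>\<phi>D \<in> subdifferential (\<lambda>\<gamma>'. Vval \<beta> \<pi> \<zeta> p A r g gbar \<gamma>' x s) \<gamma>. \<forall>i. \<phi> $ i \<le> \<phi>D $ i)"
proof -
  obtain a0 where a0: "det_feasible \<beta> \<pi> \<zeta> p A g gbar x s a0" using standing[OF x_X] by blast
  interpret P: prob \<beta> \<pi> \<zeta> p A X x r g gbar s a0
  proof (unfold_locales)
    show "\<And>s s'. 0 \<le> \<pi> s s'" using pi_pos less_imp_le by blast
  qed (use pi_sum A_fin zeta_X beta x_X r_bdd g_bdd a0 in auto)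
  have V: "(\<lambda>\<gamma>'. Vval \<beta> \<pi> \<zeta> p A r g gbar \<gamma>' x s) = P.V"
    by (simp add: fun_eq_iff Vval_def P.V_def P.FS_def P.obj_def P.feas_def)
  have W: "Wval \<beta> \<pi> \<zeta> p A r g gbar \<gamma> x s \<phi> = Sup ((\<lambda>P. ereal (P.obj \<gamma> P)) ` P.Cset \<phi>)"
    by (simp add: Wval_def P.Cset_def P.obj_def P.feas_def P.Gi_def)
  have V1: "Vval \<beta> \<pi> \<zeta> p A r g gbar \<gamma> x s = P.V \<gamma>" using V by metis
  show ?thesis
    unfolding W V V1 using P.dir1 P.dir2 by blast
qed


end
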